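(* Let $Q$ be a quadrangulation with a strong labeling $\phi$, and let $X$ be the $2$-orientation induced by $\phi$. Let $C$ be a directed cycle in $X$ and let $X_C$ be the $2$-orientation obtained from $X$ by reversing all edges of $C$. Then the strong labeling corresponding to $X_C$ is obtained from $\phi$ by complementing (replacing $\ell$ by $1-\ell$) the labels of all angles lying inside $C$, and leaving all other labels unchanged.
   Context: A quadrangulation is a simple plane graph with at least four vertices all of whose faces (including the outer face) are bounded by $4$-cycles; it is bipartite, with vertices properly colored black and white. An angle is an incidence of a vertex with a face; an angle lies inside $C$ if its face lies in the interior of $C$. A strong labeling of $Q$ is a map from the angles of $Q$ to $\{0,1\}$ such that: (G0) the two black vertices on the outer face are named $s_0$ and $s_1$, and all angles at $s_i$ are labeled $i$; (G1) for each vertex $v\notin\{s_0,s_1\}$ the labels around $v$ form one non-empty cyclic interval of $1$s and one non-empty cyclic interval of $0$s; (G2) for each edge, the two labels on the two sides of the edge coincide at one endpoint and differ at the other; (G3) the labels in each bounded face, read cyclically, are $0,0,1,1$, and reading the labels of the outer face in clockwise order starting at $s_0$ they are $0,0,1,1$. A strong labeling induces an orientation of the edges: each edge is oriented towards the endpoint at which its two labels coincide; this is a $2$-orientation, i.e. every vertex other than $s_0,s_1$ has outdegree exactly $2$. The map sending a strong labeling to its induced $2$-orientation is a bijection between strong labelings of $Q$ (with $s_0$ fixed) and $2$-orientations of $Q$; "the strong labeling corresponding to" a $2$-orientation refers to this bijection. *)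

theory Defs
  imports Main
begin

(* D      : finite set of darts (half-edges)
   alpha  : edge involution (dart -> reverse dart)
   sigma  : rotation around a vertex (next dart in COUNTERCLOCKWISE order)
   vert   : tail vertex of a dart; the darts at a vertex are one sigma-orbit
   Faces are the orbits of  phi = sigma o alpha.  With sigma counterclockwise,
   phi traverses the outer face in clockwise order.
   Angles: the angle (vertex-face incidence) represented by dart d is the
   corner at  vert d  between  sigma^-1 d  and  d; it lies in the face (phi-orbit)
   of d.  In a simple quadrangulation this is a bijection darts <-> angles. *)

definition orb :: "('d \<Rightarrow> 'd) \<Rightarrow> 'd \<Rightarrow> 'd set" where
  "orb f x = {(f ^^ n) x | n. True}"

definition fphi :: "('d \<Rightarrow> 'd) \<Rightarrow> ('d \<Rightarrow> 'd) \<Rightarrow> 'd \<Rightarrow> 'd" where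
  "fphi alpha sigma = sigma \<circ> alpha"

definition quadrangulation ::
  "'d set \<Rightarrow> ('d \<Rightarrow> 'd) \<Rightarrow> ('d \<Rightarrow> 'd) \<Rightarrow> ('d \<Rightarrow> 'v) \<Rightarrow> 'd \<Rightarrow> ('v \<Rightarrow> bool)
    \<Rightarrow> 'v \<Rightarrow> 'v \<Rightarrow> bool" where
  "quadrangulation D alpha sigma vert d0 black s0 s1 \<longleftrightarrow>
     finite D \<and>
     bij_betw alpha D D \<and> bij_betw sigma D D \<and>
     (\<forall>d\<in>D. alpha (alpha d) = d \<and> alpha d \<noteq> d) \<and>
     (\<forall>d\<in>D. \<forall>e\<in>D. vert d = vert e \<longleftrightarrow> e \<in> orb sigma d) \<and>
     \<comment> \<open>connected\<close>
     (\<forall>d\<in>D. \<forall>e\<in>D. (d, e) \<in> ({(x, alpha x) | x. x \<in> D} \<union> {(x, sigma x) | x. x \<in> D})\<^sup>*) \<and>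
     \<comment> \<open>genus 0 (Euler's formula): the map is a plane embedding\<close>
     int (card (vert ` D)) - int (card D div 2)
        + int (card {orb (fphi alpha sigma) d | d. d \<in> D}) = 2 \<and>
     \<comment> \<open>simple: no loops, no multiple edges\<close>
     (\<forall>d\<in>D. vert (alpha d) \<noteq> vert d) \<and>
     (\<forall>d\<in>D. \<forall>e\<in>D. vert d = vert e \<and> vert (alpha d) = vert (alpha e) \<longrightarrow> d = e) \<and>
     \<comment> \<open>at least four vertices\<close>
     card (vert ` D) \<ge> 4 \<and>
     \<comment> \<open>every face (including the outer one) is bounded by a 4-cycle\<close>
     (\<forall>d\<in>D. card (orb (fphi alpha sigma) d) = 4 \<and>
             card (vert ` orb (fphi alpha sigma) d) = 4) \<and>
     d0 \<in> D \<and>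
     \<comment> \<open>proper 2-colouring\<close>
     (\<forall>d\<in>D. black (vert d) \<noteq> black (vert (alpha d))) \<and>
     \<comment> \<open>s0, s1 are the two black vertices of the outer face\<close>
     s0 \<noteq> s1 \<and>
     {v \<in> vert ` orb (fphi alpha sigma) d0. black v} = {s0, s1}"

definition strong_labeling ::
  "'d set \<Rightarrow> ('d \<Rightarrow> 'd) \<Rightarrow> ('d \<Rightarrow> 'd) \<Rightarrow> ('d \<Rightarrow> 'v) \<Rightarrow> 'd \<Rightarrow> 'v \<Rightarrow> 'v
    \<Rightarrow> ('d \<Rightarrow> nat) \<Rightarrow> bool" where
  "strong_labeling D alpha sigma vert d0 s0 s1 lab \<longleftrightarrow>
     (\<forall>d\<in>D. lab d \<in> {0, 1}) \<and>
     \<comment> \<open>(G0)\<close>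
     (\<forall>d\<in>D. (vert d = s0 \<longrightarrow> lab d = 0) \<and> (vert d = s1 \<longrightarrow> lab d = 1)) \<and>
     \<comment> \<open>(G1): around v the labels form one nonempty cyclic interval of 1s
         and one nonempty cyclic interval of 0s\<close>
     (\<forall>v\<in>vert ` D - {s0, s1}. \<exists>d\<in>D. vert d = v \<and>
        (\<exists>k. 0 < k \<and> k < card (orb sigma d) \<and>
           (\<forall>i<k. lab ((sigma ^^ i) d) = 1) \<and>
           (\<forall>i. k \<le> i \<and> i < card (orb sigma d) \<longrightarrow> lab ((sigma ^^ i) d) = 0))) \<and>
     \<comment> \<open>(G2): the two angles beside edge {d, alpha d} at vert d are d and sigma d\<close>
     (\<forall>d\<in>D. (lab d = lab (sigma d)) \<noteq> (lab (alpha d) = lab (sigma (alpha d)))) \<and>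
     \<comment> \<open>(G3) bounded faces\<close>
     (\<forall>d\<in>D. orb (fphi alpha sigma) d \<noteq> orb (fphi alpha sigma) d0 \<longrightarrow>
        (\<exists>k. lab ((fphi alpha sigma ^^ k) d) = 0 \<and> lab ((fphi alpha sigma ^^ (k+1)) d) = 0 \<and>
             lab ((fphi alpha sigma ^^ (k+2)) d) = 1 \<and> lab ((fphi alpha sigma ^^ (k+3)) d) = 1)) \<and>
     \<comment> \<open>(G3) outer face, clockwise (= phi order) starting at s0\<close>
     (\<forall>d\<in>orb (fphi alpha sigma) d0. vert d = s0 \<longrightarrow>
        lab d = 0 \<and> lab (fphi alpha sigma d) = 0 \<and>
        lab ((fphi alpha sigma ^^ 2) d) = 1 \<and> lab ((fphi alpha sigma ^^ 3) d) = 1)"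

(* induced orientation: the set of darts d (from vert d to vert (alpha d)) whose
   edge is oriented towards vert (alpha d), i.e. labels coincide at the head *)
definition induced_orientation ::
  "'d set \<Rightarrow> ('d \<Rightarrow> 'd) \<Rightarrow> ('d \<Rightarrow> 'd) \<Rightarrow> ('d \<Rightarrow> nat) \<Rightarrow> 'd set" where
  "induced_orientation D alpha sigma lab = {d \<in> D. lab (alpha d) = lab (sigma (alpha d))}"

definition directed_cycle ::
  "('d \<Rightarrow> 'd) \<Rightarrow> ('d \<Rightarrow> 'v) \<Rightarrow> 'd set \<Rightarrow> 'd list \<Rightarrow> bool" where
  "directed_cycle alpha vert X cs \<longleftrightarrow>
     length cs \<ge> 3 \<and> set cs \<subseteq> X \<and> distinct (map vert cs) \<and>
     (\<forall>i<length cs. vert (alpha (cs ! i)) = vert (cs ! ((i + 1) mod length cs)))"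

definition reverse_cycle :: "('d \<Rightarrow> 'd) \<Rightarrow> 'd set \<Rightarrow> 'd list \<Rightarrow> 'd set" where
  "reverse_cycle alpha X cs = (X - set cs) \<union> alpha ` set cs"

(* angles inside C: their face cannot be reached from the outer face in the dual
   without crossing an edge of C *)
definition dual_step_avoiding ::
  "'d set \<Rightarrow> ('d \<Rightarrow> 'd) \<Rightarrow> ('d \<Rightarrow> 'd) \<Rightarrow> 'd list \<Rightarrow> ('d \<times> 'd) set" where
  "dual_step_avoiding D alpha sigma cs =
     {(d, e). d \<in> D \<and> e \<in> orb (fphi alpha sigma) d} \<union>
     {(d, alpha d) | d. d \<in> D \<and> d \<notin> set cs \<and> alpha d \<notin> set cs}"

definition inside_cycle ::
  "'d set \<Rightarrow> ('d \<Rightarrow> 'd) \<Rightarrow> ('d \<Rightarrow> 'd) \<Rightarrow> 'd \<Rightarrow> 'd list \<Rightarrow> 'd \<Rightarrow> bool" where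
  "inside_cycle D alpha sigma d0 cs d \<longleftrightarrow>
     d \<in> D \<and> (d0, d) \<notin> (dual_step_avoiding D alpha sigma cs)\<^sup>*"

end

theory Submission
  imports Defs
begin

lemma perm_funpow_in:
  assumes "bij_betw f D D" "x \<in> D" shows "(f ^^ n) x \<in> D"
  using bij_betw_funpow[OF assms(1)] assms(2) bij_betwE by blast

lemma perm_period:
  assumes "finite D" "bij_betw f D D" "x \<in> D"
  obtains n where "n > 0" "(f ^^ n) x = x"
proof -
  have "\<not> inj_on (\<lambda>i. (f ^^ i) x) {..card D}"
  proof
    assume inj: "inj_on (\<lambda>i. (f ^^ i) x) {..card D}"
    have "(\<lambda>i. (f ^^ i) x) ` {..card D} \<subseteq> D" using perm_funpow_in[OF assms(2,3)] by blast
    hence "card ((\<lambda>i. (f ^^ i) x) ` {..card D}) \<le> card D" by (simp add: card_mono assms(1))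
    with card_image[OF inj] show False by simp
  qed
  then obtain i j where ij: "i \<noteq> j" "(f ^^ i) x = (f ^^ j) x"
    unfolding inj_on_def by auto
  have key: "\<exists>n>0. (f ^^ n) x = x" if "i < j" "(f ^^ i) x = (f ^^ j) x" for i j
  proof -
    have "(f ^^ i) ((f ^^ (j - i)) x) = (f ^^ i) x"
    proof -
      have "(f ^^ i) ((f ^^ (j - i)) x) = (f ^^ (i + (j - i))) x" by (simp add: funpow_add)
      also have "i + (j - i) = j" using that by simp
      finally show ?thesis using that by simp
    qed
    moreover have "inj_on (f ^^ i) D" using bij_betw_funpow[OF assms(2)] bij_betw_imp_inj_on by blast
    ultimately have "(f ^^ (j - i)) x = x"
      using perm_funpow_in[OF assms(2,3)] assms(3) by (meson inj_on_def)
    thus ?thesis using that by (intro exI[of _ "j - i"]) auto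
  qed
  have "\<exists>n>0. (f ^^ n) x = x"
  proof (cases "i < j")
    case True then show ?thesis using key ij(2) by blast
  next
    case False then have "j < i" using ij(1) by simp
    then show ?thesis using key[of j i] ij(2) by simp
  qed
  thus ?thesis using that by blast
qed

lemma funpow_period_mult:
  assumes "(f ^^ n) x = x" shows "(f ^^ (n * k)) x = x"
proof (induction k)
  case 0 then show ?case by simp
next
  case (Suc k)
  have "(f ^^ (n * Suc k)) x = (f ^^ n) ((f ^^ (n * k)) x)"
    by (simp add: funpow_add add.commute)
  then show ?case using Suc assms by simp
qed

lemma funpow_period_mod:
  assumes "(f ^^ n) x = x" shows "(f ^^ m) x = (f ^^ (m mod n)) x"
proof -
  have "m = m mod n + n * (m div n)" by simp
  hence "(f ^^ m) x = (f ^^ (m mod n + n * (m div n))) x" by simp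
  also have "\<dots> = (f ^^ (m mod n)) ((f ^^ (n * (m div n))) x)"
    by (simp only: funpow_add comp_apply)
  finally have "(f ^^ m) x = (f ^^ (m mod n)) ((f ^^ (n * (m div n))) x)" .
  thus ?thesis using funpow_period_mult[OF assms] by simp
qed

lemma orb_in:
  assumes "bij_betw f D D" "x \<in> D" shows "orb f x \<subseteq> D"
proof
  fix y assume "y \<in> orb f x"
  then obtain n where "y = (f ^^ n) x" unfolding orb_def by auto
  thus "y \<in> D" using perm_funpow_in[OF assms] by simp
qed

lemma funpow_in_orb: "(f ^^ n) x \<in> orb f x"
  unfolding orb_def by auto

lemma self_in_orb: "x \<in> orb f x"
  using funpow_in_orb[where n=0 and f=f and x=x] by simp

lemma orb_step: "y \<in> orb f x \<Longrightarrow> f y \<in> orb f x"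
proof -
  assume "y \<in> orb f x"
  then obtain n where "y = (f ^^ n) x" unfolding orb_def by auto
  hence "f y = (f ^^ Suc n) x" by simp
  thus ?thesis using funpow_in_orb by metis
qed

lemma orb_funpow: "y \<in> orb f x \<Longrightarrow> (f ^^ n) y \<in> orb f x"
proof (induction n)
  case 0 then show ?case by simp
next
  case (Suc n) then show ?case using orb_step by simp
qed

lemma orb_trans: "y \<in> orb f x \<Longrightarrow> z \<in> orb f y \<Longrightarrow> z \<in> orb f x"
proof -
  assume "y \<in> orb f x" "z \<in> orb f y"
  then obtain n where "z = (f ^^ n) y" unfolding orb_def by auto
  thus ?thesis using orb_funpow[OF \<open>y \<in> orb f x\<close>] by simp
qed

lemma orb_sym:
  assumes "finite D" "bij_betw f D D" "x \<in> D" "y \<in> orb f x"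
  shows "x \<in> orb f y"
proof -
  obtain m where m: "y = (f ^^ m) x" using assms(4) unfolding orb_def by auto
  obtain n where n: "n > 0" "(f ^^ n) x = x" using perm_period[OF assms(1-3)] by blast
  have "n * m = (n * m - m) + m" using n(1) by simp
  have "(f ^^ (n * m - m)) y = (f ^^ (n * m - m)) ((f ^^ m) x)" using m by simp
  also have "\<dots> = (f ^^ ((n * m - m) + m)) x" by (simp only: funpow_add comp_apply)
  also have "(n * m - m) + m = n * m" using n(1) by simp
  finally have "(f ^^ (n * m - m)) y = (f ^^ (n * m)) x" .
  also have "\<dots> = x" using funpow_period_mult[OF n(2)] .
  finally show ?thesis using funpow_in_orb by metis
qed

lemma orb_eq:
  assumes "finite D" "bij_betw f D D" "x \<in> D" "y \<in> orb f x"
  shows "orb f y = orb f x"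
proof
  show "orb f y \<subseteq> orb f x" using orb_trans[OF assms(4)] by blast
  show "orb f x \<subseteq> orb f y" using orb_trans[OF orb_sym[OF assms]] by blast
qed

lemma orb_card:
  assumes "finite D" "bij_betw f D D" "x \<in> D"
  shows "card (orb f x) > 0" "(f ^^ card (orb f x)) x = x"
    "inj_on (\<lambda>i. (f ^^ i) x) {..<card (orb f x)}"
    "orb f x = (\<lambda>i. (f ^^ i) x) ` {..<card (orb f x)}"
proof -
  define n where "n = (LEAST n. n > 0 \<and> (f ^^ n) x = x)"
  obtain n0 where "n0 > 0" "(f ^^ n0) x = x" using perm_period[OF assms] by blast
  hence "n > 0 \<and> (f ^^ n) x = x" unfolding n_def by (intro LeastI[of "\<lambda>n. n > 0 \<and> (f ^^ n) x = x"]) simp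
  hence n: "n > 0" "(f ^^ n) x = x" by auto
  have min: "\<not> (f ^^ k) x = x" if "0 < k" "k < n" for k
    using not_less_Least[of k "\<lambda>n. n > 0 \<and> (f ^^ n) x = x"] that unfolding n_def by blast
  have im: "orb f x = (\<lambda>i. (f ^^ i) x) ` {..<n}"
  proof
    show "orb f x \<subseteq> (\<lambda>i. (f ^^ i) x) ` {..<n}"
    proof
      fix y assume "y \<in> orb f x"
      then obtain m where "y = (f ^^ m) x" unfolding orb_def by auto
      hence "y = (f ^^ (m mod n)) x" using funpow_period_mod[OF n(2)] by simp
      moreover have "m mod n < n" using n(1) by simp
      ultimately show "y \<in> (\<lambda>i. (f ^^ i) x) ` {..<n}" by blast
    qed
    show "(\<lambda>i. (f ^^ i) x) ` {..<n} \<subseteq> orb f x" by (rule image_subsetI) (rule funpow_in_orb)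
  qed
  have inj: "inj_on (\<lambda>i. (f ^^ i) x) {..<n}"
  proof -
    have ij_lt: "i = j" if "i < n" "j < n" "(f ^^ i) x = (f ^^ j) x" "i < j" for i j
    proof -
      have "(f ^^ i) ((f ^^ (j - i)) x) = (f ^^ i) x"
      proof -
      have "(f ^^ i) ((f ^^ (j - i)) x) = (f ^^ (i + (j - i))) x" by (simp add: funpow_add)
      also have "i + (j - i) = j" using that by simp
      finally show ?thesis using that by simp
    qed
      moreover have "inj_on (f ^^ i) D" using bij_betw_funpow[OF assms(2)] bij_betw_imp_inj_on by blast
      ultimately have "(f ^^ (j - i)) x = x"
        using perm_funpow_in[OF assms(2,3)] assms(3) by (meson inj_on_def)
      moreover have "0 < j - i" "j - i < n" using that by auto
      ultimately show ?thesis using min[of "j - i"] by blast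
    qed
    show ?thesis unfolding inj_on_def
    proof (intro ballI impI)
      fix i j assume "i \<in> {..<n}" "j \<in> {..<n}" "(f ^^ i) x = (f ^^ j) x"
      thus "i = j" using ij_lt[of i j] ij_lt[of j i] by (cases i j rule: linorder_cases) auto
    qed
  qed
  have c: "card (orb f x) = n" using im card_image[OF inj] by simp
  show "card (orb f x) > 0" "(f ^^ card (orb f x)) x = x"
    "inj_on (\<lambda>i. (f ^^ i) x) {..<card (orb f x)}"
    "orb f x = (\<lambda>i. (f ^^ i) x) ` {..<card (orb f x)}" using c n im inj by auto
qed


definition ec :: "('a \<times> 'a) set \<Rightarrow> ('a \<times> 'a) set" where
  "ec R = (R \<union> R\<inverse>)\<^sup>*"

definition ncl :: "'a set \<Rightarrow> ('a \<times> 'a) set \<Rightarrow> nat" where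
  "ncl A R = card ((\<lambda>z. ec R `` {z}) ` A)"

lemma ec_refl: "(x, x) \<in> ec R" unfolding ec_def by simp

lemma ec_sym: "(x, y) \<in> ec R \<Longrightarrow> (y, x) \<in> ec R"
proof -
  assume "(x, y) \<in> ec R"
  hence "(y, x) \<in> ((R \<union> R\<inverse>)\<inverse>)\<^sup>*" unfolding ec_def by (rule rtrancl_converseI)
  moreover have "(R \<union> R\<inverse>)\<inverse> = R \<union> R\<inverse>" by auto
  ultimately show ?thesis unfolding ec_def by simp
qed

lemma ec_trans: "(x, y) \<in> ec R \<Longrightarrow> (y, z) \<in> ec R \<Longrightarrow> (x, z) \<in> ec R"
  unfolding ec_def by (rule rtrancl_trans)

lemma ec_base: "(x, y) \<in> R \<Longrightarrow> (x, y) \<in> ec R"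
  unfolding ec_def by blast

lemma ec_base': "(x, y) \<in> R \<Longrightarrow> (y, x) \<in> ec R"
  unfolding ec_def by blast

lemma ec_mono: "R \<subseteq> R' \<Longrightarrow> ec R \<subseteq> ec R'"
  unfolding ec_def by (intro rtrancl_mono) blast

lemma ec_induct[consumes 1, case_names refl fwd bwd]:
  assumes "(a, b) \<in> ec R" "P a"
    "\<And>u v. P u \<Longrightarrow> (u, v) \<in> R \<Longrightarrow> P v" "\<And>u v. P u \<Longrightarrow> (v, u) \<in> R \<Longrightarrow> P v"
  shows "P b"
proof -
  have "(a, b) \<in> (R \<union> R\<inverse>)\<^sup>*" using assms(1) unfolding ec_def .
  thus ?thesis
  proof (induction rule: rtrancl_induct)
    case base then show ?case using assms(2) by simp
  next
    case (step y z)
    from step.hyps(2) have "(y, z) \<in> R \<or> (z, y) \<in> R" by auto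
    thus ?case using step.IH assms(3,4) by blast
  qed
qed

lemma ec_closed:
  assumes "R \<subseteq> A \<times> A" "(a, b) \<in> ec R" "a \<in> A" shows "b \<in> A"
proof (rule ec_induct[OF assms(2), where P="\<lambda>z. z \<in> A"])
  show "a \<in> A" by (rule assms(3))
  show "v \<in> A" if "u \<in> A" "(u, v) \<in> R" for u v using that assms(1) by blast
  show "v \<in> A" if "u \<in> A" "(v, u) \<in> R" for u v using that assms(1) by blast
qed

lemma ec_add_connected:
  assumes "(x, y) \<in> ec R"
  shows "ec (R \<union> {(x, y), (y, x)}) = ec R"
proof
  show "ec R \<subseteq> ec (R \<union> {(x, y), (y, x)})" by (rule ec_mono) blast
  have yx: "(y, x) \<in> ec R" using assms by (rule ec_sym)
  have st: "(u, v) \<in> ec R" if m: "(u, v) \<in> R \<union> {(x, y), (y, x)}" for u v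
  proof -
    consider "(u, v) \<in> R" | "(u, v) = (x, y)" | "(u, v) = (y, x)" using m by blast
    thus ?thesis
    proof cases
      case 1 then show ?thesis by (rule ec_base)
    next
      case 2 then show ?thesis using assms by simp
    next
      case 3 then show ?thesis using yx by simp
    qed
  qed
  show "ec (R \<union> {(x, y), (y, x)}) \<subseteq> ec R"
  proof
    fix p assume "p \<in> ec (R \<union> {(x, y), (y, x)})"
    then obtain a b where p: "p = (a, b)" "(a, b) \<in> ec (R \<union> {(x, y), (y, x)})"
      by (cases p) auto
    have "(a, b) \<in> ec R"
    proof (rule ec_induct[OF p(2), where P="\<lambda>z. (a, z) \<in> ec R"])
      show "(a, a) \<in> ec R" by (rule ec_refl)
      show "(a, v) \<in> ec R" if "(a, u) \<in> ec R" "(u, v) \<in> R \<union> {(x, y), (y, x)}" for u v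
        using ec_trans[OF that(1) st[OF that(2)]] .
      show "(a, v) \<in> ec R" if "(a, u) \<in> ec R" "(v, u) \<in> R \<union> {(x, y), (y, x)}" for u v
        using ec_trans[OF that(1) ec_sym[OF st[OF that(2)]]] .
    qed
    thus "p \<in> ec R" using p by simp
  qed
qed

lemma ec_add_disconnected_rel:
  assumes "(x, y) \<notin> ec R"
  shows "ec (R \<union> {(x, y), (y, x)}) =
     ec R \<union> (ec R `` {x}) \<times> (ec R `` {y}) \<union> (ec R `` {y}) \<times> (ec R `` {x})"
    (is "?L = ?R")
proof
  show "?R \<subseteq> ?L"
  proof -
    have E: "ec R \<subseteq> ?L" by (rule ec_mono) blast
    have xy: "(x, y) \<in> ?L" "(y, x) \<in> ?L" by (auto intro: ec_base)
    have A: "(a, b) \<in> ?L" if "(a, b) \<in> (ec R `` {x}) \<times> (ec R `` {y})" for a b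
    proof -
      have "(x, a) \<in> ec R" "(y, b) \<in> ec R" using that by auto
      hence "(a, x) \<in> ?L" "(y, b) \<in> ?L" using E ec_sym[of x a R] by auto
      thus ?thesis using ec_trans[OF ec_trans[OF \<open>(a, x) \<in> ?L\<close> xy(1)]] by blast
    qed
    have B: "(a, b) \<in> ?L" if "(a, b) \<in> (ec R `` {y}) \<times> (ec R `` {x})" for a b
    proof -
      have "(y, a) \<in> ec R" "(x, b) \<in> ec R" using that by auto
      hence "(a, y) \<in> ?L" "(x, b) \<in> ?L" using E ec_sym[of y a R] by auto
      thus ?thesis using ec_trans[OF ec_trans[OF \<open>(a, y) \<in> ?L\<close> xy(2)]] by blast
    qed
    show ?thesis
    proof
      fix p assume "p \<in> ?R"
      then obtain a b where p: "p = (a, b)" by (cases p)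
      show "p \<in> ?L" using \<open>p \<in> ?R\<close> A[of a b] B[of a b] E unfolding p by blast
    qed
  qed
  show "?L \<subseteq> ?R"
  proof
    define E where "E = ec R"
    have sym: "(p, q) \<in> E \<Longrightarrow> (q, p) \<in> E" for p q unfolding E_def by (rule ec_sym)
    have tr: "(p, q) \<in> E \<Longrightarrow> (q, r) \<in> E \<Longrightarrow> (p, r) \<in> E" for p q r
      unfolding E_def by (rule ec_trans)
    have nxy: "(x, y) \<notin> E" using assms E_def by simp
    have nyx: "(y, x) \<notin> E" using nxy sym by blast
    have RR: "?R = {(p, q). (p, q) \<in> E \<or> ((x, p) \<in> E \<and> (y, q) \<in> E) \<or> ((y, p) \<in> E \<and> (x, q) \<in> E)}"
      unfolding E_def by auto
    have step: "(a, v) \<in> ?R" if au: "(a, u) \<in> ?R" and uv: "(u, v) \<in> E \<or> (u, v) = (x, y) \<or> (u, v) = (y, x)"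
      for a u v
    proof -
      from au consider (c1) "(a, u) \<in> E" | (c2) "(x, a) \<in> E" "(y, u) \<in> E"
        | (c3) "(y, a) \<in> E" "(x, u) \<in> E" unfolding RR by blast
      then show ?thesis
      proof cases
        case c1
        from uv consider (e) "(u, v) \<in> E" | (n1) "u = x" "v = y" | (n2) "u = y" "v = x" by blast
        then show ?thesis
        proof cases
          case e then show ?thesis unfolding RR using tr[OF c1 e] by blast
        next
          case n1 then have "(x, a) \<in> E" using sym c1 by simp
          then show ?thesis unfolding RR using n1 ec_refl[of y R] E_def by blast
        next
          case n2 then have "(y, a) \<in> E" using sym c1 by simp
          then show ?thesis unfolding RR using n2 ec_refl[of x R] E_def by blast
        qed
      next
        case c2
        from uv consider (e) "(u, v) \<in> E" | (n1) "u = x" "v = y" | (n2) "u = y" "v = x" by blast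
        then show ?thesis
        proof cases
          case e then show ?thesis unfolding RR using tr[OF c2(2) e] c2(1) by blast
        next
          case n1 then show ?thesis using c2 nyx by simp
        next
          case n2 then have "(a, x) \<in> E" using sym c2(1) by simp
          then show ?thesis unfolding RR using n2 by blast
        qed
      next
        case c3
        from uv consider (e) "(u, v) \<in> E" | (n1) "u = x" "v = y" | (n2) "u = y" "v = x" by blast
        then show ?thesis
        proof cases
          case e then show ?thesis unfolding RR using tr[OF c3(2) e] c3(1) by blast
        next
          case n1 then have "(a, y) \<in> E" using sym c3(1) by simp
          then show ?thesis unfolding RR using n1 by blast
        next
          case n2 then show ?thesis using c3 nxy by simp
        qed
      qed
    qed
    fix p assume "p \<in> ?L"
    then obtain a b where p: "p = (a, b)" "(a, b) \<in> ?L" by (cases p) auto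
    have "(a, b) \<in> ?R"
    proof (rule ec_induct[OF p(2), where P="\<lambda>z. (a, z) \<in> ?R"])
      show "(a, a) \<in> ?R" using ec_refl[of a R] by blast
      show "(a, v) \<in> ?R" if "(a, u) \<in> ?R" "(u, v) \<in> R \<union> {(x, y), (y, x)}" for u v
      proof (rule step[OF that(1)])
        show "(u, v) \<in> E \<or> (u, v) = (x, y) \<or> (u, v) = (y, x)"
          using that(2) ec_base[of u v R] unfolding E_def by blast
      qed
      show "(a, v) \<in> ?R" if "(a, u) \<in> ?R" "(v, u) \<in> R \<union> {(x, y), (y, x)}" for u v
      proof (rule step[OF that(1)])
        show "(u, v) \<in> E \<or> (u, v) = (x, y) \<or> (u, v) = (y, x)"
          using that(2) ec_base'[of v u R] unfolding E_def by blast
      qed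
    qed
    thus "p \<in> ?R" using p by simp
  qed
qed

lemma ncl_add:
  assumes "finite A" "R \<subseteq> A \<times> A" "x \<in> A" "y \<in> A"
  shows "ncl A (R \<union> {(x, y), (y, x)}) + (if (x, y) \<in> ec R then 0 else 1) = ncl A R"
proof (cases "(x, y) \<in> ec R")
  case True then show ?thesis using ec_add_connected[OF True] unfolding ncl_def by simp
next
  case False
  define E where "E = ec R"
  define X where "X = E `` {x}"
  define Y where "Y = E `` {y}"
  have sym: "(p, q) \<in> E \<Longrightarrow> (q, p) \<in> E" for p q unfolding E_def by (rule ec_sym)
  have tr: "(p, q) \<in> E \<Longrightarrow> (q, r) \<in> E \<Longrightarrow> (p, r) \<in> E" for p q r
    unfolding E_def by (rule ec_trans)
  have rf: "(p, p) \<in> E" for p unfolding E_def by (rule ec_refl)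
  have E': "ec (R \<union> {(x, y), (y, x)}) = E \<union> X \<times> Y \<union> Y \<times> X"
    using ec_add_disconnected_rel[OF False] unfolding E_def X_def Y_def by simp
  have xX: "x \<in> X" and yY: "y \<in> Y" unfolding X_def Y_def using rf by auto
  have nxy: "(x, y) \<notin> E" using False E_def by simp
  have xY: "x \<notin> Y"
  proof
    assume "x \<in> Y" then have "(y, x) \<in> E" unfolding Y_def by simp
    then show False using sym nxy by blast
  qed
  have clsX: "E `` {z} = X" if z: "z \<in> X" for z
  proof -
    have xz: "(x, z) \<in> E" using z unfolding X_def by simp
    have "(z, w) \<in> E \<longleftrightarrow> (x, w) \<in> E" for w
      using tr[OF xz, of w] tr[OF sym[OF xz], of w] by blast
    thus ?thesis unfolding X_def by auto
  qed
  have clsY: "E `` {z} = Y" if z: "z \<in> Y" for z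
  proof -
    have yz: "(y, z) \<in> E" using z unfolding Y_def by simp
    have "(z, w) \<in> E \<longleftrightarrow> (y, w) \<in> E" for w
      using tr[OF yz, of w] tr[OF sym[OF yz], of w] by blast
    thus ?thesis unfolding Y_def by auto
  qed
  have XY: "X \<noteq> Y" using xX xY by blast
  have cls': "ec (R \<union> {(x, y), (y, x)}) `` {z} = (if z \<in> X \<union> Y then X \<union> Y else E `` {z})" for z
  proof (cases "z \<in> X \<union> Y")
    case True
    show ?thesis
    proof (cases "z \<in> X")
      case True
      then show ?thesis unfolding E' using clsX[OF True] by (auto simp: Image_def)
    next
      case False
      then have "z \<in> Y" using \<open>z \<in> X \<union> Y\<close> by simp
      then show ?thesis unfolding E' using clsY[OF \<open>z \<in> Y\<close>] False by (auto simp: Image_def)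
    qed
  next
    case False
    then show ?thesis unfolding E' by (auto simp: Image_def)
  qed
  define Q where "Q = (\<lambda>z. E `` {z}) ` A"
  have finQ: "finite Q" unfolding Q_def using assms(1) by simp
  have XQ: "X \<in> Q" "Y \<in> Q" unfolding Q_def X_def Y_def using assms(3,4) by auto
  have notQ: "X \<union> Y \<notin> Q - {X, Y}"
  proof
    assume "X \<union> Y \<in> Q - {X, Y}"
    then obtain z where z: "X \<union> Y = E `` {z}" unfolding Q_def by auto
    have "(z, x) \<in> E" "(z, y) \<in> E" using z xX yY by auto
    hence "(x, y) \<in> E" using tr[OF sym] by blast
    thus False using nxy by simp
  qed
  have Q': "(\<lambda>z. ec (R \<union> {(x, y), (y, x)}) `` {z}) ` A = insert (X \<union> Y) (Q - {X, Y})"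
  proof
    show "(\<lambda>z. ec (R \<union> {(x, y), (y, x)}) `` {z}) ` A \<subseteq> insert (X \<union> Y) (Q - {X, Y})"
    proof
      fix W assume "W \<in> (\<lambda>z. ec (R \<union> {(x, y), (y, x)}) `` {z}) ` A"
      then obtain z where z: "z \<in> A" "W = ec (R \<union> {(x, y), (y, x)}) `` {z}" by auto
      show "W \<in> insert (X \<union> Y) (Q - {X, Y})"
      proof (cases "z \<in> X \<union> Y")
        case True then show ?thesis using z cls' by simp
      next
        case False
        have "z \<in> E `` {z}" using rf by simp
        hence "E `` {z} \<noteq> X" "E `` {z} \<noteq> Y" using False by auto
        then show ?thesis using z cls'[of z] False unfolding Q_def by auto
      qed
    qed
    show "insert (X \<union> Y) (Q - {X, Y}) \<subseteq> (\<lambda>z. ec (R \<union> {(x, y), (y, x)}) `` {z}) ` A"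
    proof
      fix W assume W: "W \<in> insert (X \<union> Y) (Q - {X, Y})"
      show "W \<in> (\<lambda>z. ec (R \<union> {(x, y), (y, x)}) `` {z}) ` A"
      proof (cases "W = X \<union> Y")
        case True
        have "ec (R \<union> {(x, y), (y, x)}) `` {x} = X \<union> Y" using cls'[of x] xX by simp
        then show ?thesis using True assms(3) by (intro image_eqI[of _ _ x]) auto
      next
        case False
        then obtain z where z: "z \<in> A" "W = E `` {z}" "W \<noteq> X" "W \<noteq> Y"
          using W unfolding Q_def by auto
        have "z \<notin> X" using z clsX by blast
        moreover have "z \<notin> Y" using z clsY by blast
        ultimately have "ec (R \<union> {(x, y), (y, x)}) `` {z} = W" using z cls'[of z] by simp
        then show ?thesis using z by (intro image_eqI[of _ _ z]) auto
      qed
    qed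
  qed
  have "card (insert (X \<union> Y) (Q - {X, Y})) = card (Q - {X, Y}) + 1"
    using finQ notQ by simp
  also have "card (Q - {X, Y}) = card Q - 2" using finQ XQ XY by (simp add: card_Diff_subset)
  finally have c1: "card (insert (X \<union> Y) (Q - {X, Y})) = card Q - 2 + 1" .
  have "card Q \<ge> 2"
  proof -
    have "{X, Y} \<subseteq> Q" using XQ by simp
    hence "card {X, Y} \<le> card Q" using finQ card_mono by blast
    thus ?thesis using XY by simp
  qed
  hence "card (insert (X \<union> Y) (Q - {X, Y})) + 1 = card Q" using c1 by simp
  thus ?thesis using Q' False unfolding ncl_def Q_def E_def by simp
qed


locale cmap =
  fixes D :: "'d set" and alpha sigma :: "'d \<Rightarrow> 'd"
  assumes fin: "finite D"
    and ba: "bij_betw alpha D D" and bs: "bij_betw sigma D D"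
    and inv: "\<And>d. d \<in> D \<Longrightarrow> alpha (alpha d) = d"
    and nfix: "\<And>d. d \<in> D \<Longrightarrow> alpha d \<noteq> d"
    and conn: "\<And>d e. d \<in> D \<Longrightarrow> e \<in> D \<Longrightarrow>
       (d, e) \<in> ({(x, alpha x) | x. x \<in> D} \<union> {(x, sigma x) | x. x \<in> D})\<^sup>*"
begin

definition ph :: "'d \<Rightarrow> 'd" where "ph x = sigma (alpha x)"

definition RV :: "'d set \<Rightarrow> ('d \<times> 'd) set" where
  "RV S = {(x, sigma x) | x. x \<in> D} \<union> {(x, alpha x) | x. x \<in> S}"

definition RF :: "'d set \<Rightarrow> ('d \<times> 'd) set" where
  "RF S = {(x, ph x) | x. x \<in> D} \<union> {(x, alpha x) | x. x \<in> D - S}"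

definition aclosed :: "'d set \<Rightarrow> bool" where
  "aclosed S \<longleftrightarrow> S \<subseteq> D \<and> (\<forall>x\<in>S. alpha x \<in> S)"

definition gg :: "'d set \<Rightarrow> int" where
  "gg S = int (card S) + 2 * int (ncl D (RV S)) - 2 * int (ncl D (RF S))"

lemma a_in: "x \<in> D \<Longrightarrow> alpha x \<in> D" using ba bij_betwE by blast
lemma s_in: "x \<in> D \<Longrightarrow> sigma x \<in> D" using bs bij_betwE by blast
lemma ph_in: "x \<in> D \<Longrightarrow> ph x \<in> D" unfolding ph_def using a_in s_in by blast

lemma bph: "bij_betw ph D D"
proof -
  have "bij_betw (sigma \<circ> alpha) D D" using ba bs by (rule bij_betw_trans)
  thus ?thesis unfolding ph_def[abs_def] comp_def by simp
qed

lemma inj_s: "inj_on sigma D" using bs bij_betw_imp_inj_on by blast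
lemma inj_a: "inj_on alpha D" using ba bij_betw_imp_inj_on by blast

lemma RV_sub: "S \<subseteq> D \<Longrightarrow> RV S \<subseteq> D \<times> D"
  unfolding RV_def using a_in s_in by blast

lemma RF_sub: "RF S \<subseteq> D \<times> D"
  unfolding RF_def using a_in ph_in by blast

lemma RV_add:
  assumes "e \<in> D"
  shows "RV (S \<union> {e, alpha e}) = RV S \<union> {(e, alpha e), (alpha e, e)}"
  unfolding RV_def using inv[OF assms] by auto

lemma RF_add:
  assumes "e \<in> D" "alpha e \<notin> S" "e \<notin> S"
  shows "RF S = RF (S \<union> {e, alpha e}) \<union> {(e, alpha e), (alpha e, e)}"
  unfolding RF_def using inv[OF assms(1)] assms a_in by auto

lemma ec_orbit_class:
  assumes "bij_betw f D D" "x \<in> D"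
  shows "ec {(y, f y) | y. y \<in> D} `` {x} = orb f x"
proof
  show "ec {(y, f y) | y. y \<in> D} `` {x} \<subseteq> orb f x"
  proof
    fix z assume "z \<in> ec {(y, f y) | y. y \<in> D} `` {x}"
    hence xz: "(x, z) \<in> ec {(y, f y) | y. y \<in> D}" by simp
    show "z \<in> orb f x"
    proof (rule ec_induct[OF xz, where P="\<lambda>z. z \<in> orb f x"])
      show "x \<in> orb f x" by (rule self_in_orb)
      show "v \<in> orb f x" if "u \<in> orb f x" "(u, v) \<in> {(y, f y) | y. y \<in> D}" for u v
      proof -
        have "v = f u" using that(2) by auto
        thus ?thesis using orb_step[OF that(1)] by simp
      qed
      show "v \<in> orb f x" if u: "u \<in> orb f x" and vu: "(v, u) \<in> {(y, f y) | y. y \<in> D}" for u v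
      proof -
        have v: "v \<in> D" "u = f v" using vu by auto
        have "u \<in> orb f v" using v orb_step[OF self_in_orb] by simp
        hence "v \<in> orb f u" by (rule orb_sym[OF fin assms(1) v(1)])
        thus ?thesis by (rule orb_trans[OF u])
      qed
    qed
  qed
  show "orb f x \<subseteq> ec {(y, f y) | y. y \<in> D} `` {x}"
  proof
    fix z assume "z \<in> orb f x"
    then obtain n where z: "z = (f ^^ n) x" unfolding orb_def by auto
    have "(x, (f ^^ n) x) \<in> ec {(y, f y) | y. y \<in> D}" for n
    proof (induction n)
      case 0 then show ?case by (simp add: ec_refl)
    next
      case (Suc n)
      have "(f ^^ n) x \<in> D" using perm_funpow_in[OF assms] .
      hence "((f ^^ n) x, (f ^^ Suc n) x) \<in> {(y, f y) | y. y \<in> D}" by simp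
      hence "((f ^^ n) x, (f ^^ Suc n) x) \<in> ec {(y, f y) | y. y \<in> D}" by (rule ec_base)
      then show ?case by (rule ec_trans[OF Suc.IH])
    qed
    thus "z \<in> ec {(y, f y) | y. y \<in> D} `` {x}" using z by simp
  qed
qed

lemma sep_step:
  assumes S: "aclosed S" and e: "e \<in> D" "e \<notin> S"
    and nV: "(e, alpha e) \<notin> ec (RV S)"
  shows "(e, alpha e) \<in> ec (RF (S \<union> {e, alpha e}))"
proof (rule ccontr)
  assume nF: "(e, alpha e) \<notin> ec (RF (S \<union> {e, alpha e}))"
  define S' where "S' = S \<union> {e, alpha e}"
  define E where "E = ec (RF S')"
  define Z where "Z = ec (RV S) `` {e}"
  define psi where "psi z = (if z \<in> S then sigma (alpha z) else sigma z)" for z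
  have SD: "S \<subseteq> D" using S unfolding aclosed_def by blast
  have Sa: "x \<in> S \<Longrightarrow> alpha x \<in> S" for x using S unfolding aclosed_def by blast
  have ZD: "Z \<subseteq> D"
  proof
    fix z assume "z \<in> Z"
    hence "(e, z) \<in> ec (RV S)" unfolding Z_def by simp
    thus "z \<in> D" using ec_closed[OF RV_sub[OF SD] _ e(1)] by blast
  qed
  have eZ: "e \<in> Z" unfolding Z_def by (simp add: ec_refl)
  have aeZ: "alpha e \<notin> Z" using nV unfolding Z_def by simp
  have Zs: "sigma z \<in> Z" if "z \<in> Z" for z
  proof -
    have "(z, sigma z) \<in> RV S" unfolding RV_def using that ZD by blast
    hence "(z, sigma z) \<in> ec (RV S)" by (rule ec_base)
    moreover have "(e, z) \<in> ec (RV S)" using that unfolding Z_def by simp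
    ultimately show ?thesis unfolding Z_def using ec_trans by fastforce
  qed
  have Za: "alpha z \<in> Z" if "z \<in> Z" "z \<in> S" for z
  proof -
    have "(z, alpha z) \<in> RV S" unfolding RV_def using that by blast
    hence "(z, alpha z) \<in> ec (RV S)" by (rule ec_base)
    moreover have "(e, z) \<in> ec (RV S)" using that unfolding Z_def by simp
    ultimately show ?thesis unfolding Z_def using ec_trans by fastforce
  qed
  have psiZ: "psi z \<in> Z" if "z \<in> Z" for z
    using Zs[OF Za[OF that]] Zs[OF that] unfolding psi_def by auto
  have inj: "inj_on psi D"
  proof (rule inj_onI)
    fix x y assume xy: "x \<in> D" "y \<in> D" "psi x = psi y"
    have m: "(if x \<in> S then alpha x else x) \<in> D" "(if y \<in> S then alpha y else y) \<in> D"
      using xy a_in by auto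
    have "sigma (if x \<in> S then alpha x else x) = sigma (if y \<in> S then alpha y else y)"
      using xy(3) unfolding psi_def by (auto split: if_splits)
    hence eq: "(if x \<in> S then alpha x else x) = (if y \<in> S then alpha y else y)"
      using inj_s m unfolding inj_on_def by blast
    show "x = y"
    proof (cases "x \<in> S"; cases "y \<in> S")
      assume "x \<in> S" "y \<in> S"
      then show ?thesis using eq inv xy by (metis)
    next
      assume "x \<in> S" "y \<notin> S"
      then show ?thesis using eq Sa by auto
    next
      assume "x \<notin> S" "y \<in> S"
      then show ?thesis using eq Sa by auto
    next
      assume "x \<notin> S" "y \<notin> S"
      then show ?thesis using eq by auto
    qed
  qed
  have sE: "(sigma e, e) \<notin> E"
  proof
    assume se: "(sigma e, e) \<in> E"
    have "(alpha e, ph (alpha e)) \<in> RF S'" unfolding RF_def using a_in[OF e(1)] by blast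
    moreover have "ph (alpha e) = sigma e" unfolding ph_def using inv[OF e(1)] by simp
    ultimately have "(alpha e, sigma e) \<in> E" unfolding E_def using ec_base by fastforce
    hence "(alpha e, e) \<in> E" using ec_trans se unfolding E_def by fastforce
    hence "(e, alpha e) \<in> E" unfolding E_def by (rule ec_sym)
    thus False using nF unfolding E_def S'_def by simp
  qed
  define W where "W = {x \<in> Z. (sigma e, x) \<in> E}"
  have WD: "W \<subseteq> D" using ZD W_def by blast
  have psiW: "psi ` W \<subseteq> W"
  proof
    fix y assume "y \<in> psi ` W"
    then obtain x where x: "x \<in> W" "y = psi x" by blast
    have xZ: "x \<in> Z" and sx: "(sigma e, x) \<in> E" using x W_def by auto
    have xD: "x \<in> D" using xZ ZD by blast
    have xne: "x \<noteq> e" using sx sE by blast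
    have xnae: "x \<noteq> alpha e" using xZ aeZ by blast
    have "(x, psi x) \<in> E"
    proof (cases "x \<in> S")
      case True
      have "(x, ph x) \<in> RF S'" unfolding RF_def using xD by blast
      then show ?thesis unfolding E_def psi_def ph_def using True ec_base by fastforce
    next
      case False
      have "x \<notin> S'" using False xne xnae unfolding S'_def by blast
      hence "(x, alpha x) \<in> RF S'" unfolding RF_def using xD by blast
      moreover have "(alpha x, ph (alpha x)) \<in> RF S'" unfolding RF_def using a_in[OF xD] by blast
      moreover have "ph (alpha x) = psi x" unfolding ph_def psi_def using False inv[OF xD] by simp
      ultimately have "(x, alpha x) \<in> E" "(alpha x, psi x) \<in> E" unfolding E_def using ec_base by fastforce+
      then show ?thesis unfolding E_def using ec_trans by fastforce
    qed
    hence "(sigma e, psi x) \<in> E" using sx ec_trans unfolding E_def by fastforce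
    thus "y \<in> W" using x psiZ[OF xZ] W_def by blast
  qed
  have finW: "finite W" using WD fin finite_subset by blast
  have injW: "inj_on psi W" using inj WD inj_on_subset by blast
  have eqW: "psi ` W = W" using endo_inj_surj[OF finW psiW injW] .
  have seW: "sigma e \<in> W" unfolding W_def E_def using Zs[OF eZ] ec_refl[of "sigma e" "RF S'"] by blast
  have "psi e = sigma e" unfolding psi_def using e(2) by simp
  then obtain w where w: "w \<in> W" "psi w = psi e" using seW eqW by (metis imageE)
  have "w = e" using inj w WD e(1) unfolding inj_on_def by blast
  hence "(sigma e, e) \<in> E" using w W_def by blast
  thus False using sE by blast
qed


lemma aclosed_add:
  assumes "aclosed S" "e \<in> D"
  shows "aclosed (S \<union> {e, alpha e})"
  using assms inv[OF assms(2)] a_in[OF assms(2)] unfolding aclosed_def by auto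

lemma gg_step:
  assumes S: "aclosed S" and e: "e \<in> D" "e \<notin> S"
  shows "gg (S \<union> {e, alpha e}) = gg S + 2
     - 2 * (if (e, alpha e) \<in> ec (RV S) then 0 else 1)
     - 2 * (if (e, alpha e) \<in> ec (RF (S \<union> {e, alpha e})) then 0 else 1)"
proof -
  have SD: "S \<subseteq> D" using S unfolding aclosed_def by blast
  have ae: "alpha e \<notin> S"
  proof
    assume "alpha e \<in> S"
    hence "alpha (alpha e) \<in> S" using S unfolding aclosed_def by blast
    thus False using inv[OF e(1)] e(2) by simp
  qed
  have c: "card (S \<union> {e, alpha e}) = card S + 2"
  proof -
    have "finite S" using SD fin finite_subset by blast
    thus ?thesis using ae e(2) nfix[OF e(1)] by simp
  qed
  have v: "ncl D (RV (S \<union> {e, alpha e})) + (if (e, alpha e) \<in> ec (RV S) then 0 else 1) = ncl D (RV S)"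
    unfolding RV_add[OF e(1)] by (rule ncl_add[OF fin RV_sub[OF SD] e(1) a_in[OF e(1)]])
  have f: "ncl D (RF S) + (if (e, alpha e) \<in> ec (RF (S \<union> {e, alpha e})) then 0 else 1)
      = ncl D (RF (S \<union> {e, alpha e}))"
    unfolding RF_add[OF e(1) ae e(2)] by (rule ncl_add[OF fin RF_sub e(1) a_in[OF e(1)]])
  show ?thesis unfolding gg_def c using v f by (simp split: if_splits)
qed

lemma gg_le:
  assumes S: "aclosed S" and e: "e \<in> D" "e \<notin> S"
  shows "gg S \<le> gg (S \<union> {e, alpha e})"
  using gg_step[OF assms] sep_step[OF assms] by (simp split: if_splits)

lemma gg_mono:
  assumes "aclosed S" "aclosed T" "S \<subseteq> T"
  shows "gg S \<le> gg T \<and> even (card (T - S))"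
  using assms
proof (induction "card (T - S)" arbitrary: S rule: less_induct)
  case less
  show ?case
  proof (cases "T - S = {}")
    case True
    then have "T = S" using less.prems by blast
    then show ?thesis by simp
  next
    case False
    then obtain e where e: "e \<in> T" "e \<notin> S" by blast
    have TD: "T \<subseteq> D" using less.prems unfolding aclosed_def by blast
    have eD: "e \<in> D" using e TD by blast
    define S' where "S' = S \<union> {e, alpha e}"
    have cS': "aclosed S'" unfolding S'_def by (rule aclosed_add[OF less.prems(1) eD])
    have ae: "alpha e \<in> T" using e less.prems unfolding aclosed_def by blast
    have ae': "alpha e \<notin> S"
    proof
      assume "alpha e \<in> S"
      hence "alpha (alpha e) \<in> S" using less.prems unfolding aclosed_def by blast
      thus False using inv[OF eD] e(2) by simp
    qed
    have sub: "S' \<subseteq> T" unfolding S'_def using less.prems e ae by blast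
    have finT: "finite T" using TD fin finite_subset by blast
    have TS: "T - S = (T - S') \<union> {e, alpha e}" "(T - S') \<inter> {e, alpha e} = {}"
      unfolding S'_def using e ae ae' by auto
    have cc: "card (T - S) = card (T - S') + 2"
      using TS nfix[OF eD] finT by (simp add: card_Un_disjoint)
    hence "card (T - S') < card (T - S)" by simp
    from less.hyps[OF this cS' less.prems(2) sub]
    have ih: "gg S' \<le> gg T" "even (card (T - S'))" by auto
    have "gg S \<le> gg S'" unfolding S'_def by (rule gg_le[OF less.prems(1) eD e(2)])
    then show ?thesis using ih cc by simp
  qed
qed

lemma aclosed_empty: "aclosed {}" unfolding aclosed_def by simp
lemma aclosed_D: "aclosed D" unfolding aclosed_def using a_in by blast

lemma ncl_RF_D: "ncl D (RF D) = card ((\<lambda>d. orb ph d) ` D)"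
proof -
  have "RF D = {(y, ph y) | y. y \<in> D}" unfolding RF_def by auto
  hence "ec (RF D) `` {x} = orb ph x" if "x \<in> D" for x
    using ec_orbit_class[OF bph that] by simp
  hence "(\<lambda>z. ec (RF D) `` {z}) ` D = (\<lambda>d. orb ph d) ` D" by auto
  thus ?thesis unfolding ncl_def by simp
qed

lemma ncl_RV_empty: "ncl D (RV {}) = card ((\<lambda>d. orb sigma d) ` D)"
proof -
  have "RV {} = {(y, sigma y) | y. y \<in> D}" unfolding RV_def by auto
  hence "ec (RV {}) `` {x} = orb sigma x" if "x \<in> D" for x
    using ec_orbit_class[OF bs that] by simp
  hence "(\<lambda>z. ec (RV {}) `` {z}) ` D = (\<lambda>d. orb sigma d) ` D" by auto
  thus ?thesis unfolding ncl_def by simp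
qed

lemma conn_sub:
  assumes "\<And>x. x \<in> D \<Longrightarrow> (x, alpha x) \<in> ec R" "\<And>x. x \<in> D \<Longrightarrow> (x, sigma x) \<in> ec R"
    "d \<in> D" "e \<in> D"
  shows "(d, e) \<in> ec R"
proof -
  have "(d, e) \<in> ({(x, alpha x) | x. x \<in> D} \<union> {(x, sigma x) | x. x \<in> D})\<^sup>*"
    using conn[OF assms(3,4)] .
  thus ?thesis
  proof (induction rule: rtrancl_induct)
    case base then show ?case by (rule ec_refl)
  next
    case (step y z)
    then have "(y, z) \<in> ec R" using assms(1,2) by blast
    then show ?case using ec_trans[OF step.IH] by blast
  qed
qed

lemma ncl_one:
  assumes "\<And>x. x \<in> D \<Longrightarrow> (x, alpha x) \<in> ec R" "\<And>x. x \<in> D \<Longrightarrow> (x, sigma x) \<in> ec R"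
    "D \<noteq> {}" "R \<subseteq> D \<times> D"
  shows "ncl D R = 1"
proof -
  have "ec R `` {z} = D" if "z \<in> D" for z
  proof
    show "ec R `` {z} \<subseteq> D" using ec_closed[OF assms(4) _ that] by blast
    show "D \<subseteq> ec R `` {z}" using conn_sub[OF assms(1,2) that] by blast
  qed
  hence "(\<lambda>z. ec R `` {z}) ` D = {D}" using assms(3) by auto
  thus ?thesis unfolding ncl_def by simp
qed

lemma ncl_RV_D: "D \<noteq> {} \<Longrightarrow> ncl D (RV D) = 1"
proof (rule ncl_one)
  show "(x, alpha x) \<in> ec (RV D)" if "x \<in> D" for x
    using that unfolding RV_def by (intro ec_base) blast
  show "(x, sigma x) \<in> ec (RV D)" if "x \<in> D" for x
    using that unfolding RV_def by (intro ec_base) blast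
  show "RV D \<subseteq> D \<times> D" using RV_sub by blast
qed

lemma ncl_RF_empty: "D \<noteq> {} \<Longrightarrow> ncl D (RF {}) = 1"
proof (rule ncl_one)
  show a: "(x, alpha x) \<in> ec (RF {})" if "x \<in> D" for x
    using that unfolding RF_def by (intro ec_base) blast
  show "(x, sigma x) \<in> ec (RF {})" if "x \<in> D" for x
  proof -
    have "(alpha x, ph (alpha x)) \<in> RF {}" unfolding RF_def using a_in[OF that] by blast
    moreover have "ph (alpha x) = sigma x" unfolding ph_def using inv[OF that] by simp
    ultimately have "(alpha x, sigma x) \<in> ec (RF {})" using ec_base by fastforce
    thus ?thesis using ec_trans[OF a[OF that]] by blast
  qed
  show "RF {} \<subseteq> D \<times> D" by (rule RF_sub)
qed

lemma jordan_edge: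
  assumes euler: "int (ncl D (RV {})) - int (card D div 2) + int (ncl D (RF D)) = 2"
    and ne: "D \<noteq> {}"
    and C0: "aclosed C0" and e: "e \<in> D" "e \<notin> C0"
    and vc: "(e, alpha e) \<in> ec (RV C0)"
  shows "(e, alpha e) \<notin> ec (RF (C0 \<union> {e, alpha e}))"
proof
  assume fc: "(e, alpha e) \<in> ec (RF (C0 \<union> {e, alpha e}))"
  have C: "aclosed (C0 \<union> {e, alpha e})" by (rule aclosed_add[OF C0 e(1)])
  have C0D: "C0 \<subseteq> D" using C0 unfolding aclosed_def by blast
  have CD: "C0 \<union> {e, alpha e} \<subseteq> D" using C unfolding aclosed_def by blast
  have m1: "gg {} \<le> gg C0" using gg_mono[OF aclosed_empty C0] by blast
  have m3: "gg (C0 \<union> {e, alpha e}) \<le> gg D"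
    using gg_mono[OF C aclosed_D CD] by auto
  have evD: "even (card D)" using gg_mono[OF aclosed_empty aclosed_D] by simp
  have st: "gg (C0 \<union> {e, alpha e}) = gg C0 + 2" using gg_step[OF C0 e] vc fc by simp
  have g0: "gg {} = 2 * int (ncl D (RV {})) - 2" unfolding gg_def ncl_RF_empty[OF ne] by simp
  have gD: "gg D = int (card D) + 2 - 2 * int (ncl D (RF D))" unfolding gg_def ncl_RV_D[OF ne] by simp
  obtain k where k: "card D = 2 * k" using evD by (elim evenE)
  hence "int (card D) = 2 * int (card D div 2)" by simp
  hence "gg D = gg {}" using g0 gD euler by linarith
  thus False using m1 m3 st by linarith
qed

end


lemma cyc_interval_changes:
  fixes L :: "nat \<Rightarrow> nat"
  assumes per: "\<And>i. L (i + n) = L i" and k: "0 < k" "k < n"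
    and one: "\<And>i. i < k \<Longrightarrow> L i = 1" and zero: "\<And>i. k \<le> i \<Longrightarrow> i < n \<Longrightarrow> L i = 0"
  shows "{i. i < n \<and> L i \<noteq> L (Suc i)} = {k - 1, n - 1}"
proof -
  have Ln: "L n = 1" using per[of 0] one[of 0] k by simp
  have "i < n \<and> L i \<noteq> L (Suc i) \<longleftrightarrow> i = k - 1 \<or> i = n - 1" for i
  proof (cases "i < k - 1")
    case True
    then show ?thesis using one[of i] one[of "Suc i"] k by auto
  next
    case False
    show ?thesis
    proof (cases "i = k - 1")
      case True
      then show ?thesis using one[of i] zero[of "Suc i"] k by auto
    next
      case False
      hence ki: "k \<le> i" using \<open>\<not> i < k - 1\<close> by simp
      show ?thesis
      proof (cases "i < n - 1")
        case True
        then show ?thesis using zero[of i] zero[of "Suc i"] ki k by auto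
      next
        case False
        show ?thesis
        proof (cases "i = n - 1")
          case True
          then have "Suc i = n" using k by simp
          then show ?thesis using zero[of i] ki k Ln True by auto
        next
          case False
          then show ?thesis using \<open>\<not> i < n - 1\<close> k by auto
        qed
      qed
    qed
  qed
  thus ?thesis by blast
qed

lemma const_run:
  fixes L :: "nat \<Rightarrow> nat"
  assumes "\<And>j. s \<le> j \<Longrightarrow> j < e \<Longrightarrow> L j = L (Suc j)"
  shows "s + t \<le> e \<Longrightarrow> L (s + t) = L s"
proof (induction t)
  case 0 then show ?case by simp
next
  case (Suc t)
  then have "L (s + t) = L (Suc (s + t))" using assms[of "s + t"] by simp
  then show ?case using Suc by simp
qed

lemma cyc_two_changes:
  fixes L :: "nat \<Rightarrow> nat"
  assumes n: "0 < n" and per: "\<And>i. L (i + n) = L i" and bin: "\<And>i. L i \<in> {0, 1}"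
    and two: "card {i. i < n \<and> L i \<noteq> L (Suc i)} = 2"
  shows "\<exists>r k. 0 < k \<and> k < n \<and> (\<forall>i<k. L (r + i) = 1) \<and> (\<forall>i. k \<le> i \<and> i < n \<longrightarrow> L (r + i) = 0)"
proof -
  define Ch where "Ch = {i. i < n \<and> L i \<noteq> L (Suc i)}"
  obtain a b where ab: "Ch = {a, b}" "a \<noteq> b" using two unfolding Ch_def by (meson card_2_iff)
  obtain a b where ab: "Ch = {a, b}" "a < b"
  proof (cases "a < b")
    case True then show ?thesis using that ab by blast
  next
    case False then have "b < a" using ab(2) by simp
    then show ?thesis using that[of b a] ab by blast
  qed
  have bn: "b < n" and an: "a < n" using ab unfolding Ch_def by auto
  have La: "L a \<noteq> L (Suc a)" and Lb: "L b \<noteq> L (Suc b)" using ab unfolding Ch_def by auto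
  have nc: "L j = L (Suc j)" if "j < n" "j \<noteq> a" "j \<noteq> b" for j
    using that ab unfolding Ch_def by blast
  have run1: "L (Suc a + t) = L (Suc a)" if "Suc a + t \<le> b" for t
    by (rule const_run[OF _ that]) (use nc bn in auto)
  have nc2: "L j = L (Suc j)" if "Suc b \<le> j" "j < a + n" for j
  proof (cases "j < n")
    case True then show ?thesis using nc[of j] that ab by simp
  next
    case False
    then obtain m where m: "j = m + n" by (metis add.commute le_add_diff_inverse not_less)
    have "m < a" using m that by simp
    hence "L m = L (Suc m)" using nc[of m] an ab by simp
    moreover have "L (Suc j) = L (Suc m)" using per[of "Suc m"] m by simp
    ultimately show ?thesis using per[of m] m by simp
  qed
  have run2: "L (Suc b + t) = L (Suc b)" if "Suc b + t \<le> a + n" for t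
    by (rule const_run[OF _ that]) (use nc2 in auto)
  have e1: "L (Suc a) = L b" using run1[of "b - Suc a"] ab by simp
  have e2: "L (Suc b) = L a"
  proof -
    have eq: "Suc b + (a + n - Suc b) = a + n" using bn by simp
    have h: "Suc b + (a + n - Suc b) \<le> a + n" using bn by simp
    have "L (Suc b + (a + n - Suc b)) = L (Suc b)" by (rule run2[OF h])
    hence "L (a + n) = L (Suc b)" unfolding eq .
    thus ?thesis using per[of a] by simp
  qed
  show ?thesis
  proof (cases "L (Suc a) = 1")
    case True
    have Lsb: "L (Suc b) = 0" using e2 La True bin[of a] by auto
    have A: "0 < b - a" "b - a < n" using ab bn by auto
    have B: "\<forall>i<b - a. L (Suc a + i) = 1" using run1 True by simp
    have C: "\<forall>i. b - a \<le> i \<and> i < n \<longrightarrow> L (Suc a + i) = 0"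
    proof (intro allI impI)
      fix i assume that: "b - a \<le> i \<and> i < n"
      show "L (Suc a + i) = 0"
      proof -
        have "Suc a + i = Suc b + (i - (b - a))" using that ab(2) by arith
        moreover have "Suc b + (i - (b - a)) \<le> a + n" using that ab(2) by arith
        ultimately show ?thesis using run2[of "i - (b - a)"] Lsb by simp
      qed
    qed
    show ?thesis using A B C by blast
  next
    case False
    have L0: "L (Suc a) = 0" using False bin[of "Suc a"] by simp
    have Lsb: "L (Suc b) = 1" using e2 La L0 bin[of a] by auto
    have A: "0 < a + n - b" "a + n - b < n" using ab bn by auto
    have B: "\<forall>i<a + n - b. L (Suc b + i) = 1" using run2 Lsb by simp
    have C: "\<forall>i. a + n - b \<le> i \<and> i < n \<longrightarrow> L (Suc b + i) = 0"
    proof (intro allI impI)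
      fix i assume that: "a + n - b \<le> i \<and> i < n"
      show "L (Suc b + i) = 0"
      proof -
        have "Suc b + i = (Suc a + (i - (a + n - b))) + n" using that ab(2) bn by arith
        hence "L (Suc b + i) = L ((Suc a + (i - (a + n - b))) + n)" by (rule arg_cong)
        hence "L (Suc b + i) = L (Suc a + (i - (a + n - b)))" using per[of "Suc a + (i - (a + n - b))"] by simp
        moreover have "Suc a + (i - (a + n - b)) \<le> b" using that ab(2) bn by arith
        ultimately show ?thesis using run1 L0 by simp
      qed
    qed
    show ?thesis using A B C by blast
  qed
qed


lemma orb_pred_card:
  assumes "finite D" "bij_betw f D D" "d \<in> D"
  shows "card {x \<in> orb f d. P x} = card {i. i < card (orb f d) \<and> P ((f ^^ i) d)}"
proof -
  let ?n = "card (orb f d)"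
  have im: "orb f d = (\<lambda>i. (f ^^ i) d) ` {..<?n}" and inj: "inj_on (\<lambda>i. (f ^^ i) d) {..<?n}"
    using orb_card[OF assms] by auto
  have "{x \<in> orb f d. P x} = (\<lambda>i. (f ^^ i) d) ` {i. i < ?n \<and> P ((f ^^ i) d)}"
    using im by auto
  moreover have "inj_on (\<lambda>i. (f ^^ i) d) {i. i < ?n \<and> P ((f ^^ i) d)}"
    using inj by (rule inj_on_subset) auto
  ultimately show ?thesis by (simp add: card_image)
qed

lemma bin_flip_eq:
  fixes a b :: nat
  assumes "a \<in> {0, 1}" "b \<in> {0, 1}"
  shows "((if p then 1 - a else a) = (if q then 1 - b else b)) \<longleftrightarrow> ((a = b) = (p = q))"
  using assms by auto

locale lset = cmap D alpha sigma for D :: "'d set" and alpha sigma +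
  fixes vert :: "'d \<Rightarrow> 'v" and d0 :: 'd and s0 s1 :: 'v and lab :: "'d \<Rightarrow> nat" and cs :: "'d list"
  assumes vorb: "\<And>d e. d \<in> D \<Longrightarrow> e \<in> D \<Longrightarrow> vert d = vert e \<longleftrightarrow> e \<in> orb sigma d"
  and euler: "int (card (vert ` D)) - int (card D div 2) + int (card {orb (fphi alpha sigma) d | d. d \<in> D}) = 2"
  and d0D: "d0 \<in> D"
  and s0o: "s0 \<in> vert ` orb (fphi alpha sigma) d0" and s1o: "s1 \<in> vert ` orb (fphi alpha sigma) d0"
  and face4: "\<And>d. d \<in> D \<Longrightarrow> card (orb (fphi alpha sigma) d) = 4"
  and SL: "strong_labeling D alpha sigma vert d0 s0 s1 lab"
  and DC: "directed_cycle alpha vert (induced_orientation D alpha sigma lab) cs"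
begin

lemma fphi_eq: "fphi alpha sigma = ph"
  by (rule ext) (simp add: fphi_def ph_def)

abbreviation "X \<equiv> induced_orientation D alpha sigma lab"
abbreviation "k \<equiv> length cs"
definition nxt :: "nat \<Rightarrow> nat" where "nxt i = Suc i mod k"
definition S :: "'d set" where "S = set cs \<union> alpha ` set cs"

lemma DC': "k \<ge> 3 \<and> set cs \<subseteq> X \<and> distinct (map vert cs) \<and>
     (\<forall>i<k. vert (alpha (cs ! i)) = vert (cs ! ((i + 1) mod k)))"
  using DC unfolding directed_cycle_def .
lemma k3: "k \<ge> 3" using DC' by (rule conjunct1)
lemma csX: "set cs \<subseteq> X" using DC' by (elim conjE)
lemma dvert: "distinct (map vert cs)" using DC' by (elim conjE)
lemma cyc: "i < k \<Longrightarrow> vert (alpha (cs ! i)) = vert (cs ! nxt i)"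
proof -
  assume i: "i < k"
  have "\<forall>i<k. vert (alpha (cs ! i)) = vert (cs ! ((i + 1) mod k))" using DC' by (elim conjE)
  thus ?thesis using i unfolding nxt_def by simp
qed

lemma X_D: "X \<subseteq> D" unfolding induced_orientation_def by blast
lemma csD: "set cs \<subseteq> D" using csX X_D by blast
lemma csiD: "i < k \<Longrightarrow> cs ! i \<in> D" using csD by auto
lemma csiX: "i < k \<Longrightarrow> cs ! i \<in> X" using csX by auto
lemma nxt_lt: "i < k \<Longrightarrow> nxt i < k" unfolding nxt_def using k3 by (intro mod_less_divisor) linarith

lemmas SL' = SL[unfolded strong_labeling_def]
lemma lab01: "x \<in> D \<Longrightarrow> lab x \<in> {0, 1}"
proof -
  assume "x \<in> D"
  moreover have "\<forall>d\<in>D. lab d \<in> {0, 1}" using SL' by (elim conjE)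
  ultimately show ?thesis by blast
qed
lemma G0: "\<forall>d\<in>D. (vert d = s0 \<longrightarrow> lab d = 0) \<and> (vert d = s1 \<longrightarrow> lab d = 1)"
  using SL' by (elim conjE)
lemma G1: "\<forall>v\<in>vert ` D - {s0, s1}. \<exists>d\<in>D. vert d = v \<and>
        (\<exists>k. 0 < k \<and> k < card (orb sigma d) \<and>
           (\<forall>i<k. lab ((sigma ^^ i) d) = 1) \<and>
           (\<forall>i. k \<le> i \<and> i < card (orb sigma d) \<longrightarrow> lab ((sigma ^^ i) d) = 0))"
  using SL' by (elim conjE)
lemma G2: "x \<in> D \<Longrightarrow> (lab x = lab (sigma x)) \<noteq> (lab (alpha x) = lab (sigma (alpha x)))"
proof -
  assume "x \<in> D"
  moreover have "\<forall>d\<in>D. (lab d = lab (sigma d)) \<noteq> (lab (alpha d) = lab (sigma (alpha d)))"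
    using SL' by (elim conjE)
  ultimately show ?thesis by blast
qed
lemma G3b: "\<forall>d\<in>D. orb (fphi alpha sigma) d \<noteq> orb (fphi alpha sigma) d0 \<longrightarrow>
        (\<exists>k. lab ((fphi alpha sigma ^^ k) d) = 0 \<and> lab ((fphi alpha sigma ^^ (k+1)) d) = 0 \<and>
             lab ((fphi alpha sigma ^^ (k+2)) d) = 1 \<and> lab ((fphi alpha sigma ^^ (k+3)) d) = 1)"
  using SL' by (elim conjE)
lemma G3o: "\<forall>d\<in>orb (fphi alpha sigma) d0. vert d = s0 \<longrightarrow>
        lab d = 0 \<and> lab (fphi alpha sigma d) = 0 \<and>
        lab ((fphi alpha sigma ^^ 2) d) = 1 \<and> lab ((fphi alpha sigma ^^ 3) d) = 1"
  using SL' by (elim conjE)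

lemma X_def': "x \<in> X \<longleftrightarrow> x \<in> D \<and> lab (alpha x) = lab (sigma (alpha x))"
  unfolding induced_orientation_def by simp

lemma X_iff: "x \<in> D \<Longrightarrow> x \<in> X \<longleftrightarrow> lab x \<noteq> lab (sigma x)"
  using G2[of x] unfolding X_def' by simp

lemma X_alpha: "x \<in> X \<Longrightarrow> alpha x \<notin> X"
proof
  assume x: "x \<in> X" "alpha x \<in> X"
  have xD: "x \<in> D" using x X_D by blast
  have "lab (alpha x) = lab (sigma (alpha x))" using x(1) unfolding X_def' by simp
  moreover have "lab x = lab (sigma x)" using x(2) inv[OF xD] unfolding X_def' by simp
  ultimately show False using G2[OF xD] by simp
qed

lemma vert_inj: "i < k \<Longrightarrow> j < k \<Longrightarrow> vert (cs ! i) = vert (cs ! j) \<Longrightarrow> i = j"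
proof -
  assume a: "i < k" "j < k" "vert (cs ! i) = vert (cs ! j)"
  have "\<forall>i<k. \<forall>j<k. i \<noteq> j \<longrightarrow> vert (cs ! i) \<noteq> vert (cs ! j)"
    using dvert by (simp add: distinct_conv_nth)
  thus "i = j" using a by blast
qed

lemma nxt_inj: "i < k \<Longrightarrow> j < k \<Longrightarrow> nxt i = nxt j \<Longrightarrow> i = j"
  unfolding nxt_def
proof -
  assume ij: "i < k" "j < k" "Suc i mod k = Suc j mod k"
  show "i = j"
  proof (cases "Suc i = k"; cases "Suc j = k")
    assume "Suc i = k" "Suc j = k" then show ?thesis by simp
  next
    assume "Suc i = k" "Suc j \<noteq> k" then show ?thesis using ij by simp
  next
    assume "Suc i \<noteq> k" "Suc j = k" then show ?thesis using ij by simp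
  next
    assume "Suc i \<noteq> k" "Suc j \<noteq> k" then show ?thesis using ij by simp
  qed
qed

lemma S_D: "S \<subseteq> D" unfolding S_def using csD a_in by blast

lemma aclosed_S: "aclosed S"
  unfolding aclosed_def
proof
  show "S \<subseteq> D" by (rule S_D)
  show "\<forall>x\<in>S. alpha x \<in> S"
  proof
    fix x assume "x \<in> S"
    then consider "x \<in> set cs" | y where "y \<in> set cs" "x = alpha y" unfolding S_def by blast
    then show "alpha x \<in> S"
    proof cases
      case 1 then show ?thesis unfolding S_def by blast
    next
      case 2 then have "alpha x = y" using inv csD by auto
      then show ?thesis using 2 unfolding S_def by blast
    qed
  qed
qed

lemma S_at_vertex:
  assumes i: "i < k" and x: "x \<in> S" "vert x = vert (cs ! nxt i)"
  shows "x = cs ! nxt i \<or> x = alpha (cs ! i)"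
proof -
  from x(1) consider (a) j where "j < k" "x = cs ! j" | (b) j where "j < k" "x = alpha (cs ! j)"
    unfolding S_def by (auto simp: in_set_conv_nth)
  then show ?thesis
  proof cases
    case a
    then have "j = nxt i" using vert_inj[of j "nxt i"] x(2) nxt_lt[OF i] by simp
    then show ?thesis using a by simp
  next
    case b
    then have "vert (cs ! nxt j) = vert (cs ! nxt i)" using cyc[of j] x(2) by simp
    hence "nxt j = nxt i" using vert_inj nxt_lt b(1) i by blast
    hence "j = i" using nxt_inj b(1) i by blast
    then show ?thesis using b by simp
  qed
qed

lemma vert_orb: "d \<in> D \<Longrightarrow> orb sigma d = {x \<in> D. vert x = vert d}"
proof -
  assume d: "d \<in> D"
  have sub: "orb sigma d \<subseteq> D" by (rule orb_in[OF bs d])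
  show ?thesis
  proof (intro set_eqI iffI)
    fix x assume x: "x \<in> orb sigma d"
    hence "x \<in> D" using sub by blast
    thus "x \<in> {x \<in> D. vert x = vert d}" using vorb[OF d, of x] x by simp
  next
    fix x assume "x \<in> {x \<in> D. vert x = vert d}"
    thus "x \<in> orb sigma d" using vorb[OF d, of x] by simp
  qed
qed

lemma sigma_vert: "x \<in> D \<Longrightarrow> vert (sigma x) = vert x"
proof -
  assume x: "x \<in> D"
  have "sigma x \<in> orb sigma x" by (rule orb_step[OF self_in_orb])
  thus ?thesis using vorb[OF x s_in[OF x]] by simp
qed

abbreviation "E \<equiv> ec (RF S)"

lemma E_ph: "x \<in> D \<Longrightarrow> (x, ph x) \<in> E"
  by (rule ec_base) (auto simp: RF_def)

lemma E_alpha: "x \<in> D \<Longrightarrow> x \<notin> S \<Longrightarrow> (x, alpha x) \<in> E"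
  by (rule ec_base) (auto simp: RF_def)

lemma E_sigma: "x \<in> D \<Longrightarrow> (alpha x, sigma x) \<in> E"
proof -
  assume x: "x \<in> D"
  have "(alpha x, ph (alpha x)) \<in> E" by (rule E_ph[OF a_in[OF x]])
  moreover have "ph (alpha x) = sigma x" unfolding ph_def using inv[OF x] by simp
  ultimately show ?thesis by simp
qed

lemma E_sigma_nS: "x \<in> D \<Longrightarrow> x \<notin> S \<Longrightarrow> (x, sigma x) \<in> E"
proof -
  assume x: "x \<in> D" "x \<notin> S"
  show ?thesis by (rule ec_trans[OF E_alpha[OF x] E_sigma[OF x(1)]])
qed

lemma rot:
  assumes p: "p \<in> D" and q: "q \<in> D" "vert q = vert p" and pq: "p \<noteq> q"
    and only: "\<And>x. x \<in> D \<Longrightarrow> x \<in> S \<Longrightarrow> vert x = vert p \<Longrightarrow> x = p \<or> x = q"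
  shows "(sigma p, q) \<in> E"
proof (rule ccontr)
  assume nq: "(sigma p, q) \<notin> E"
  define W where "W = {x \<in> D. vert x = vert p \<and> (sigma p, x) \<in> E}"
  have cl: "sigma x \<in> W \<union> {p}" if "x \<in> W \<union> {p}" for x
  proof (cases "x = p")
    case True
    have "sigma p \<in> D" "vert (sigma p) = vert p" using s_in[OF p] sigma_vert[OF p] by auto
    then show ?thesis using True ec_refl[of "sigma p" "RF S"] W_def by blast
  next
    case False
    then have x: "x \<in> D" "vert x = vert p" "(sigma p, x) \<in> E" using that W_def by auto
    have "x \<noteq> q" using x(3) nq by blast
    hence "x \<notin> S" using only[OF x(1) _ x(2)] False by blast
    hence "(x, sigma x) \<in> E" using E_sigma_nS x(1) by blast
    hence "(sigma p, sigma x) \<in> E" by (rule ec_trans[OF x(3)])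
    moreover have "sigma x \<in> D" "vert (sigma x) = vert p" using s_in[OF x(1)] sigma_vert[OF x(1)] x(2) by auto
    ultimately show ?thesis unfolding W_def by blast
  qed
  have "(sigma ^^ n) p \<in> W \<union> {p}" for n
  proof (induction n)
    case 0 then show ?case by simp
  next
    case (Suc n) then show ?case using cl by simp
  qed
  hence "orb sigma p \<subseteq> W \<union> {p}" unfolding orb_def by blast
  moreover have "q \<in> orb sigma p" using vorb[OF p q(1)] q(2) by simp
  ultimately have "q \<in> W" using pq by blast
  thus False using nq W_def by blast
qed

lemma alpha_ne_next: "i < k \<Longrightarrow> alpha (cs ! i) \<noteq> cs ! nxt i"
proof
  assume i: "i < k" and eq: "alpha (cs ! i) = cs ! nxt i"
  have "alpha (cs ! i) \<notin> X" by (rule X_alpha[OF csiX[OF i]])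
  moreover have "cs ! nxt i \<in> X" by (rule csiX[OF nxt_lt[OF i]])
  ultimately show False using eq by simp
qed

lemma side_step:
  assumes i: "i < k"
  shows "(cs ! i, cs ! nxt i) \<in> E" "(alpha (cs ! i), alpha (cs ! nxt i)) \<in> E"
proof -
  let ?c = "cs ! i" and ?c' = "cs ! nxt i"
  have cD: "?c \<in> D" and c'D: "?c' \<in> D" using csiD i nxt_lt by auto
  have acD: "alpha ?c \<in> D" using a_in[OF cD] .
  have vv: "vert ?c' = vert (alpha ?c)" using cyc[OF i] by simp
  have ne: "alpha ?c \<noteq> ?c'" using alpha_ne_next[OF i] .
  have only: "x = alpha ?c \<or> x = ?c'" if "x \<in> D" "x \<in> S" "vert x = vert (alpha ?c)" for x
    using S_at_vertex[OF i that(2)] that(3) vv by auto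
  have r1: "(sigma (alpha ?c), ?c') \<in> E" by (rule rot[OF acD c'D vv ne only])
  have "(?c, ph ?c) \<in> E" by (rule E_ph[OF cD])
  hence "(?c, sigma (alpha ?c)) \<in> E" unfolding ph_def .
  thus "(?c, ?c') \<in> E" using r1 by (rule ec_trans)
  have only2: "x = ?c' \<or> x = alpha ?c" if "x \<in> D" "x \<in> S" "vert x = vert ?c'" for x
    using S_at_vertex[OF i that(2) that(3)] by auto
  have r2: "(sigma ?c', alpha ?c) \<in> E" by (rule rot[OF c'D acD vv[symmetric] ne[symmetric] only2])
  have "(alpha ?c', sigma ?c') \<in> E" by (rule E_sigma[OF c'D])
  hence "(alpha ?c', alpha ?c) \<in> E" using r2 by (rule ec_trans)
  thus "(alpha ?c, alpha ?c') \<in> E" by (rule ec_sym)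
qed

lemma side_chain:
  assumes "i < k"
  shows "(cs ! 0, cs ! i) \<in> E \<and> (alpha (cs ! 0), alpha (cs ! i)) \<in> E"
  using assms
proof (induction i)
  case 0 then show ?case by (simp add: ec_refl)
next
  case (Suc i)
  then have i: "i < k" by simp
  have n: "nxt i = Suc i" unfolding nxt_def using Suc.prems by simp
  have a: "(cs ! 0, cs ! i) \<in> E" "(alpha (cs ! 0), alpha (cs ! i)) \<in> E" using Suc.IH[OF i] by auto
  have b: "(cs ! i, cs ! Suc i) \<in> E" "(alpha (cs ! i), alpha (cs ! Suc i)) \<in> E"
    using side_step[OF i] unfolding n by auto
  show ?case using ec_trans[OF a(1) b(1)] ec_trans[OF a(2) b(2)] by simp
qed

lemma same_vertex_V:
  assumes "x \<in> D" "y \<in> D" "vert x = vert y"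
  shows "(x, y) \<in> ec (RV T)"
proof -
  have "y \<in> orb sigma x" using vorb[OF assms(1,2)] assms(3) by simp
  moreover have "RV {} = {(y, sigma y) | y. y \<in> D}" unfolding RV_def by auto
  ultimately have "y \<in> ec (RV {}) `` {x}" using ec_orbit_class[OF bs assms(1)] by simp
  moreover have "ec (RV {}) \<subseteq> ec (RV T)" by (rule ec_mono) (auto simp: RV_def)
  ultimately show ?thesis by blast
qed

lemma k_pos: "0 < k" using k3 by linarith

lemma jordan_cs0: "(cs ! 0, alpha (cs ! 0)) \<notin> E"
proof
  assume bad: "(cs ! 0, alpha (cs ! 0)) \<in> E"
  define m where "m = k - 1"
  have m: "m < k" "Suc m = k" unfolding m_def using k3 by auto
  define e where "e = cs ! m"
  define B where "B = butlast cs"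
  define C0 where "C0 = set B \<union> alpha ` set B"
  have eD: "e \<in> D" unfolding e_def using csiD m by simp
  have csne: "cs \<noteq> []" using k_pos by auto
  have "last cs = e" unfolding e_def m_def using last_conv_nth[OF csne] .
  hence cs_eq: "cs = B @ [e]" unfolding B_def using append_butlast_last_id[OF csne] by simp
  have lenB: "length B = m" unfolding B_def m_def by simp
  have Bnth: "B ! j = cs ! j" if "j < m" for j using that cs_eq lenB by (simp add: nth_append)
  have setB: "set B \<subseteq> set cs" using cs_eq by auto
  have SC0: "S = C0 \<union> {e, alpha e}" unfolding S_def C0_def using cs_eq by auto
  have C0: "aclosed C0"
    unfolding aclosed_def
  proof
    show "C0 \<subseteq> D" unfolding C0_def using setB csD a_in by blast
    show "\<forall>x\<in>C0. alpha x \<in> C0"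
    proof
      fix x assume "x \<in> C0"
      then consider "x \<in> set B" | y where "y \<in> set B" "x = alpha y" unfolding C0_def by blast
      then show "alpha x \<in> C0"
      proof cases
        case 1 then show ?thesis unfolding C0_def by blast
      next
        case 2 then have "alpha x = y" using inv csD setB by auto
        then show ?thesis using 2 unfolding C0_def by blast
      qed
    qed
  qed
  have enC0: "e \<notin> C0"
  proof
    assume "e \<in> C0"
    then consider "e \<in> set B" | y where "y \<in> set B" "e = alpha y" unfolding C0_def by blast
    then show False
    proof cases
      case 1
      have "distinct cs" using dvert distinct_map by blast
      then show False using 1 cs_eq by simp
    next
      case 2
      have "y \<in> X" using 2 setB csX by auto
      moreover have "e \<in> X" unfolding e_def using csiX m(1) by simp
      ultimately show False using X_alpha 2 by blast
    qed
  qed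
  have vc: "(e, alpha e) \<in> ec (RV C0)"
  proof -
    have ch: "(cs ! 0, cs ! j) \<in> ec (RV C0)" if "j \<le> m" for j
      using that
    proof (induction j)
      case 0 then show ?case by (simp add: ec_refl)
    next
      case (Suc j)
      then have j: "j < m" by simp
      have cj: "cs ! j \<in> set B" using Bnth[OF j] j lenB by (metis nth_mem)
      have "(cs ! j, alpha (cs ! j)) \<in> RV C0" unfolding RV_def C0_def using cj by blast
      hence 1: "(cs ! j, alpha (cs ! j)) \<in> ec (RV C0)" by (rule ec_base)
      have jk: "j < k" using j m by simp
      have "nxt j = Suc j" unfolding nxt_def using j m by simp
      hence "vert (alpha (cs ! j)) = vert (cs ! Suc j)" using cyc[OF jk] by simp
      hence 2: "(alpha (cs ! j), cs ! Suc j) \<in> ec (RV C0)"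
        using same_vertex_V a_in csiD jk Suc.prems m by simp
      show ?case using ec_trans[OF ec_trans[OF Suc.IH[OF Suc_leD[OF Suc.prems]] 1] 2] .
    qed
    have "nxt m = 0" unfolding nxt_def using m by simp
    hence "vert (alpha e) = vert (cs ! 0)" using cyc[OF m(1)] e_def by simp
    hence "(alpha e, cs ! 0) \<in> ec (RV C0)" using same_vertex_V a_in[OF eD] csiD k_pos by simp
    have "(cs ! 0, e) \<in> ec (RV C0)" using ch[of m] e_def by simp
    hence "(e, cs ! 0) \<in> ec (RV C0)" by (rule ec_sym)
    thus ?thesis using ec_sym[OF \<open>(alpha e, cs ! 0) \<in> ec (RV C0)\<close>] by (rule ec_trans)
  qed
  have ne: "D \<noteq> {}" using d0D by blast
  have e1: "ncl D (RV {}) = card (vert ` D)"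
  proof -
    have "(\<lambda>d. orb sigma d) ` D = (\<lambda>v. {x \<in> D. vert x = v}) ` (vert ` D)"
      using vert_orb by (auto simp: image_iff)
    moreover have "inj_on (\<lambda>v. {x \<in> D. vert x = v}) (vert ` D)"
      by (rule inj_onI) blast
    ultimately show ?thesis unfolding ncl_RV_empty by (simp add: card_image)
  qed
  have e2: "ncl D (RF D) = card {orb (fphi alpha sigma) d | d. d \<in> D}"
    unfolding ncl_RF_D fphi_eq by (simp add: Setcompr_eq_image)
  have eu: "int (ncl D (RV {})) - int (card D div 2) + int (ncl D (RF D)) = 2"
    using euler unfolding e1 e2 .
  have "(e, alpha e) \<notin> ec (RF (C0 \<union> {e, alpha e}))"
    by (rule jordan_edge[OF eu ne C0 eD enC0 vc])
  hence ne': "(e, alpha e) \<notin> E" unfolding SC0 .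
  have "(cs ! 0, e) \<in> E" "(alpha (cs ! 0), alpha e) \<in> E" using side_chain[OF m(1)] e_def by auto
  hence "(e, alpha e) \<in> E" using ec_trans[OF ec_trans[OF ec_sym[of "cs ! 0" e] bad]] by blast
  thus False using ne' by simp
qed

lemma cover:
  assumes x: "x \<in> D"
  shows "(cs ! 0, x) \<in> E \<or> (alpha (cs ! 0), x) \<in> E"
proof -
  let ?P = "\<lambda>y. (cs ! 0, y) \<in> E \<or> (alpha (cs ! 0), y) \<in> E"
  have clA: "?P (alpha y)" if y: "y \<in> D" "?P y" for y
  proof (cases "y \<in> S")
    case False
    have ya: "(y, alpha y) \<in> E" by (rule E_alpha[OF y(1) False])
    from y(2) show ?thesis
    proof
      assume "(cs ! 0, y) \<in> E" then show ?thesis using ec_trans[OF _ ya] by blast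
    next
      assume "(alpha (cs ! 0), y) \<in> E" then show ?thesis using ec_trans[OF _ ya] by blast
    qed
  next
    case True
    then consider (a) i where "i < k" "y = cs ! i" | (b) i where "i < k" "y = alpha (cs ! i)"
      unfolding S_def by (auto simp: in_set_conv_nth)
    then show ?thesis
    proof cases
      case a then show ?thesis using side_chain[OF a(1)] by simp
    next
      case b
      then have "alpha y = cs ! i" using inv csiD by simp
      then show ?thesis using side_chain[OF b(1)] by simp
    qed
  qed
  have clS: "?P (sigma y)" if y: "y \<in> D" "?P y" for y
  proof -
    have ya: "(alpha y, sigma y) \<in> E" by (rule E_sigma[OF y(1)])
    from clA[OF y] show ?thesis
    proof
      assume "(cs ! 0, alpha y) \<in> E" then show ?thesis using ec_trans[OF _ ya] by blast
    next
      assume "(alpha (cs ! 0), alpha y) \<in> E" then show ?thesis using ec_trans[OF _ ya] by blast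
    qed
  qed
  have c0: "cs ! 0 \<in> D" using csiD k_pos by simp
  have "(cs ! 0, x) \<in> ({(x, alpha x) | x. x \<in> D} \<union> {(x, sigma x) | x. x \<in> D})\<^sup>*"
    by (rule conn[OF c0 x])
  hence "?P x \<and> x \<in> D"
  proof (induction rule: rtrancl_induct)
    case base then show ?case using c0 ec_refl[of "cs ! 0" "RF S"] by blast
  next
    case (step y z)
    from step.hyps(2) consider "z = alpha y" "y \<in> D" | "z = sigma y" "y \<in> D" by blast
    then show ?case
    proof cases
      case 1 then show ?thesis using clA step.IH a_in by blast
    next
      case 2 then show ?thesis using clS step.IH s_in by blast
    qed
  qed
  thus ?thesis by blast
qed

lemma d0_side: "((d0, cs ! 0) \<in> E) \<noteq> ((d0, alpha (cs ! 0)) \<in> E)"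
proof
  assume eq: "((d0, cs ! 0) \<in> E) = ((d0, alpha (cs ! 0)) \<in> E)"
  have "(d0, cs ! 0) \<in> E \<or> (d0, alpha (cs ! 0)) \<in> E"
    using cover[OF d0D] ec_sym[of "cs ! 0" d0] ec_sym[of "alpha (cs ! 0)" d0] by blast
  hence both: "(d0, cs ! 0) \<in> E" "(d0, alpha (cs ! 0)) \<in> E" using eq by auto
  have "(cs ! 0, alpha (cs ! 0)) \<in> E" using ec_trans[OF ec_sym[OF both(1)] both(2)] .
  thus False using jordan_cs0 by simp
qed

definition fl :: "'d \<Rightarrow> bool" where "fl x \<longleftrightarrow> x \<in> D \<and> (d0, x) \<notin> E"

lemma notin_S_cs: "x \<in> D \<Longrightarrow> x \<notin> S \<longleftrightarrow> x \<notin> set cs \<and> alpha x \<notin> set cs"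
proof -
  assume x: "x \<in> D"
  have "x \<in> alpha ` set cs \<longleftrightarrow> alpha x \<in> set cs"
  proof
    assume "x \<in> alpha ` set cs"
    then obtain c where "c \<in> set cs" "x = alpha c" by blast
    thus "alpha x \<in> set cs" using inv csD by auto
  next
    assume "alpha x \<in> set cs"
    thus "x \<in> alpha ` set cs" using inv[OF x] by (metis image_eqI)
  qed
  thus ?thesis unfolding S_def by blast
qed

lemma dsa_iff: "(a, b) \<in> dual_step_avoiding D alpha sigma cs \<longleftrightarrow>
   (a \<in> D \<and> b \<in> orb ph a) \<or> (a \<in> D \<and> b = alpha a \<and> a \<notin> set cs \<and> alpha a \<notin> set cs)"
  unfolding dual_step_avoiding_def fphi_eq by auto

lemma RF_iff: "(a, b) \<in> RF T \<longleftrightarrow> (a \<in> D \<and> b = ph a) \<or> (a \<in> D \<and> a \<notin> T \<and> b = alpha a)"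
  unfolding RF_def by auto

lemma dual_eq: "(dual_step_avoiding D alpha sigma cs)\<^sup>* = E"
proof
  have ph_sub: "ec {(y, ph y) | y. y \<in> D} \<subseteq> E" by (rule ec_mono) (auto simp: RF_def)
  have "dual_step_avoiding D alpha sigma cs \<subseteq> E"
  proof
    fix p assume p: "p \<in> dual_step_avoiding D alpha sigma cs"
    obtain d e where de: "p = (d, e)" by (cases p)
    from p[unfolded de dsa_iff] show "p \<in> E"
    proof
      assume f: "d \<in> D \<and> e \<in> orb ph d"
      then have "e \<in> ec {(y, ph y) | y. y \<in> D} `` {d}" using ec_orbit_class[OF bph] by simp
      then show ?thesis using de ph_sub by blast
    next
      assume a: "d \<in> D \<and> e = alpha d \<and> d \<notin> set cs \<and> alpha d \<notin> set cs"
      then have "d \<notin> S" using notin_S_cs by blast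
      then show ?thesis using a de E_alpha by simp
    qed
  qed
  hence "(dual_step_avoiding D alpha sigma cs)\<^sup>* \<subseteq> E\<^sup>*" by (rule rtrancl_mono)
  thus "(dual_step_avoiding D alpha sigma cs)\<^sup>* \<subseteq> E" unfolding ec_def rtrancl_idemp .
  have "RF S \<union> (RF S)\<inverse> \<subseteq> dual_step_avoiding D alpha sigma cs"
  proof
    fix p assume p: "p \<in> RF S \<union> (RF S)\<inverse>"
    obtain a b where ab: "p = (a, b)" by (cases p)
    from p[unfolded ab] have "(a, b) \<in> RF S \<or> (b, a) \<in> RF S" by auto
    then consider (f) "a \<in> D" "b = ph a" | (al) "a \<in> D" "a \<notin> S" "b = alpha a"
      | (f') "b \<in> D" "a = ph b" | (al') "b \<in> D" "b \<notin> S" "a = alpha b"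
      unfolding RF_iff by blast
    then show "p \<in> dual_step_avoiding D alpha sigma cs"
    proof cases
      case f
      have "ph a \<in> orb ph a" by (rule orb_step[OF self_in_orb])
      then show ?thesis unfolding ab dsa_iff using f by simp
    next
      case al
      then show ?thesis unfolding ab dsa_iff using notin_S_cs[OF al(1)] by simp
    next
      case f'
      have "ph b \<in> orb ph b" by (rule orb_step[OF self_in_orb])
      hence "b \<in> orb ph (ph b)" by (rule orb_sym[OF fin bph f'(1)])
      then show ?thesis unfolding ab dsa_iff using f' ph_in by simp
    next
      case al'
      have "alpha b \<notin> set cs" "alpha (alpha b) \<notin> set cs"
        using notin_S_cs[OF al'(1)] al'(2) inv[OF al'(1)] by auto
      then show ?thesis unfolding ab dsa_iff using al' a_in inv[OF al'(1)] by simp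
    qed
  qed
  thus "E \<subseteq> (dual_step_avoiding D alpha sigma cs)\<^sup>*" unfolding ec_def by (rule rtrancl_mono)
qed

lemma inside_eq: "inside_cycle D alpha sigma d0 cs x = fl x"
  unfolding inside_cycle_def fl_def dual_eq ..

lemma fl_E: "x \<in> D \<Longrightarrow> y \<in> D \<Longrightarrow> (x, y) \<in> E \<Longrightarrow> fl x = fl y"
proof -
  assume xy: "x \<in> D" "y \<in> D" "(x, y) \<in> E"
  have "(d0, x) \<in> E \<longleftrightarrow> (d0, y) \<in> E"
    using ec_trans[OF _ xy(3), of d0] ec_trans[OF _ ec_sym[OF xy(3)], of d0] by blast
  thus ?thesis unfolding fl_def using xy by simp
qed

lemma fl_ph: "x \<in> D \<Longrightarrow> fl (ph x) = fl x"
  using fl_E[OF _ ph_in E_ph] by simp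

lemma fl_funpow: "x \<in> D \<Longrightarrow> fl ((ph ^^ n) x) = fl x"
proof (induction n)
  case 0 then show ?case by simp
next
  case (Suc n)
  have "(ph ^^ n) x \<in> D" by (rule perm_funpow_in[OF bph Suc.prems])
  then show ?case using fl_ph Suc by simp
qed

lemma fl_sigma: "x \<in> D \<Longrightarrow> fl (sigma x) = fl (alpha x)"
  using fl_E[OF a_in s_in E_sigma] by simp

lemma fl_alpha_nS: "x \<in> D \<Longrightarrow> x \<notin> S \<Longrightarrow> fl (alpha x) = fl x"
  using fl_E[OF _ a_in E_alpha] by simp

lemma fl_alpha_cs: "x \<in> set cs \<Longrightarrow> fl (alpha x) \<noteq> fl x"
proof -
  assume "x \<in> set cs"
  then obtain i where i: "i < k" "x = cs ! i" by (auto simp: in_set_conv_nth)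
  have xD: "x \<in> D" using i csiD by simp
  have c0: "cs ! 0 \<in> D" using csiD k_pos by simp
  have s: "(cs ! 0, x) \<in> E" "(alpha (cs ! 0), alpha x) \<in> E" using side_chain[OF i(1)] i by auto
  have "fl x = fl (cs ! 0)" using fl_E[OF c0 xD s(1)] by simp
  moreover have "fl (alpha x) = fl (alpha (cs ! 0))" using fl_E[OF a_in[OF c0] a_in[OF xD] s(2)] by simp
  moreover have "fl (cs ! 0) \<noteq> fl (alpha (cs ! 0))" unfolding fl_def using d0_side c0 a_in by auto
  ultimately show ?thesis by simp
qed

lemma fl_alpha_S: "x \<in> S \<Longrightarrow> fl (alpha x) \<noteq> fl x"
proof -
  assume "x \<in> S"
  then consider "x \<in> set cs" | c where "c \<in> set cs" "x = alpha c" unfolding S_def by blast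
  then show ?thesis
  proof cases
    case 1 then show ?thesis by (rule fl_alpha_cs)
  next
    case 2
    then have "alpha x = c" using inv csD by auto
    then show ?thesis using fl_alpha_cs[OF 2(1)] 2(2) by auto
  qed
qed

definition nl :: "'d \<Rightarrow> nat" where "nl x = (if fl x then 1 - lab x else lab x)"

lemma nl01: "x \<in> D \<Longrightarrow> nl x \<in> {0, 1}"
  using lab01[of x] unfolding nl_def by auto

lemma nl_eq: "x \<in> D \<Longrightarrow> y \<in> D \<Longrightarrow> (nl x = nl y) \<longleftrightarrow> ((lab x = lab y) = (fl x = fl y))"
  unfolding nl_def by (rule bin_flip_eq[OF lab01 lab01])

lemma G2new: "x \<in> D \<Longrightarrow> (nl x = nl (sigma x)) \<noteq> (nl (alpha x) = nl (sigma (alpha x)))"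
proof -
  assume x: "x \<in> D"
  have ax: "alpha x \<in> D" using a_in[OF x] .
  have 1: "(nl x = nl (sigma x)) \<longleftrightarrow> ((lab x = lab (sigma x)) = (fl x = fl (alpha x)))"
    using nl_eq[OF x s_in[OF x]] fl_sigma[OF x] by simp
  have 2: "(nl (alpha x) = nl (sigma (alpha x))) \<longleftrightarrow> ((lab (alpha x) = lab (sigma (alpha x))) = (fl x = fl (alpha x)))"
    using nl_eq[OF ax s_in[OF ax]] fl_sigma[OF ax] inv[OF x] by auto
  show ?thesis using 1 2 G2[OF x] by blast
qed

abbreviation "X' \<equiv> induced_orientation D alpha sigma nl"

lemma X'_iff: "x \<in> D \<Longrightarrow> x \<in> X' \<longleftrightarrow> nl x \<noteq> nl (sigma x)"
  using G2new[of x] unfolding induced_orientation_def by simp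

lemma X'_X: "x \<in> D \<Longrightarrow> x \<in> X' \<longleftrightarrow> ((x \<in> X) = (fl (alpha x) = fl x))"
proof -
  assume x: "x \<in> D"
  have ax: "alpha x \<in> D" using a_in[OF x] .
  have "x \<in> X' \<longleftrightarrow> nl (alpha x) = nl (sigma (alpha x))" unfolding induced_orientation_def using x by simp
  also have "\<dots> \<longleftrightarrow> (lab (alpha x) = lab (sigma (alpha x))) = (fl (alpha x) = fl x)"
    using nl_eq[OF ax s_in[OF ax]] fl_sigma[OF ax] inv[OF x] by simp
  also have "\<dots> \<longleftrightarrow> ((x \<in> X) = (fl (alpha x) = fl x))" unfolding X_def' using x by simp
  finally show ?thesis .
qed

lemma Xrev: "X' = reverse_cycle alpha X cs"
proof (intro set_eqI iffI)
  fix x assume x': "x \<in> X'"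
  hence x: "x \<in> D" unfolding induced_orientation_def by simp
  show "x \<in> reverse_cycle alpha X cs"
  proof (cases "x \<in> S")
    case True
    then have "fl (alpha x) \<noteq> fl x" by (rule fl_alpha_S)
    then have "x \<notin> X" using x' X'_X[OF x] by simp
    then have "x \<notin> set cs" using csX by blast
    then have "x \<in> alpha ` set cs" using True S_def by blast
    then show ?thesis unfolding reverse_cycle_def by blast
  next
    case False
    then have "fl (alpha x) = fl x" using fl_alpha_nS[OF x] by simp
    then have "x \<in> X" using x' X'_X[OF x] by simp
    then show ?thesis unfolding reverse_cycle_def using False S_def by blast
  qed
next
  fix x assume r: "x \<in> reverse_cycle alpha X cs"
  then consider (a) "x \<in> X" "x \<notin> set cs" | (b) c where "c \<in> set cs" "x = alpha c"
    unfolding reverse_cycle_def by blast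
  then show "x \<in> X'"
  proof cases
    case a
    have x: "x \<in> D" using a X_D by blast
    have "x \<notin> alpha ` set cs"
    proof
      assume "x \<in> alpha ` set cs"
      then obtain c where "c \<in> set cs" "x = alpha c" by blast
      then show False using X_alpha csX a(1) by blast
    qed
    then have "x \<notin> S" using a S_def by blast
    then have "fl (alpha x) = fl x" using fl_alpha_nS[OF x] by simp
    then show ?thesis using X'_X[OF x] a by simp
  next
    case b
    have cD: "c \<in> D" using b csD by blast
    have x: "x \<in> D" using b a_in[OF cD] by simp
    have "x \<in> S" using b S_def by blast
    then have "fl (alpha x) \<noteq> fl x" by (rule fl_alpha_S)
    moreover have "x \<notin> X" using b X_alpha csX by blast
    ultimately show ?thesis using X'_X[OF x] by simp
  qed
qed

lemma no_S_s:
  assumes x: "x \<in> D" and v: "vert x = s0 \<or> vert x = s1"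
  shows "x \<notin> S"
proof -
  have nocs: "y \<notin> set cs" if y: "y \<in> D" "vert y = s0 \<or> vert y = s1" for y
  proof
    assume yc: "y \<in> set cs"
    hence "lab y \<noteq> lab (sigma y)" using X_iff[OF y(1)] csX by blast
    moreover have "vert (sigma y) = vert y" by (rule sigma_vert[OF y(1)])
    moreover have "sigma y \<in> D" by (rule s_in[OF y(1)])
    ultimately show False using G0 y by fastforce
  qed
  have "x \<notin> alpha ` set cs"
  proof
    assume "x \<in> alpha ` set cs"
    then obtain i where i: "i < k" "x = alpha (cs ! i)" by (auto simp: in_set_conv_nth)
    have "vert (cs ! nxt i) = vert x" using cyc[OF i(1)] i(2) by simp
    moreover have "cs ! nxt i \<in> D" using csiD nxt_lt i by simp
    ultimately show False using nocs[of "cs ! nxt i"] v nth_mem nxt_lt[OF i(1)] by auto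
  qed
  thus ?thesis using nocs[OF x v] S_def by blast
qed

lemma vertex_uniform:
  assumes y: "y \<in> D" and noS: "\<And>x. x \<in> D \<Longrightarrow> vert x = vert y \<Longrightarrow> x \<notin> S"
    and z: "z \<in> D" "vert z = vert y"
  shows "(y, z) \<in> E"
proof -
  have "(sigma ^^ n) y \<in> D \<and> vert ((sigma ^^ n) y) = vert y \<and> (y, (sigma ^^ n) y) \<in> E" for n
  proof (induction n)
    case 0 then show ?case using y ec_refl[of y "RF S"] by simp
  next
    case (Suc n)
    let ?w = "(sigma ^^ n) y"
    have w: "?w \<in> D" "vert ?w = vert y" "(y, ?w) \<in> E" using Suc by auto
    have "(?w, sigma ?w) \<in> E" using E_sigma_nS[OF w(1) noS[OF w(1,2)]] .
    then show ?case using ec_trans[OF w(3)] s_in[OF w(1)] sigma_vert[OF w(1)] w(2) by simp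
  qed
  moreover have "z \<in> orb sigma y" using vorb[OF y z(1)] z(2) by simp
  ultimately show ?thesis unfolding orb_def by blast
qed

lemma outer_E: "x \<in> orb ph d0 \<Longrightarrow> (d0, x) \<in> E"
proof -
  assume "x \<in> orb ph d0"
  hence "x \<in> ec {(y, ph y) | y. y \<in> D} `` {d0}" using ec_orbit_class[OF bph d0D] by simp
  moreover have "ec {(y, ph y) | y. y \<in> D} \<subseteq> E" by (rule ec_mono) (auto simp: RF_def)
  ultimately show ?thesis by blast
qed

lemma fl_s:
  assumes x: "x \<in> D" and v: "vert x = s0 \<or> vert x = s1"
  shows "\<not> fl x"
proof -
  obtain y where y: "y \<in> orb ph d0" "vert y = vert x"
  proof (cases "vert x = s0")
    case True then show ?thesis using s0o that unfolding fphi_eq by auto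
  next
    case False then have "vert x = s1" using v by simp
    then show ?thesis using s1o that unfolding fphi_eq by auto
  qed
  have yD: "y \<in> D" using y(1) orb_in[OF bph d0D] by blast
  have "(y, x) \<in> E"
  proof (rule vertex_uniform[OF yD _ x])
    show "vert x = vert y" using y by simp
    show "w \<notin> S" if "w \<in> D" "vert w = vert y" for w using no_S_s[OF that(1)] that(2) y(2) v by simp
  qed
  hence "(d0, x) \<in> E" using ec_trans[OF outer_E[OF y(1)]] by blast
  thus ?thesis unfolding fl_def by simp
qed

lemma G0new: "\<forall>d\<in>D. (vert d = s0 \<longrightarrow> nl d = 0) \<and> (vert d = s1 \<longrightarrow> nl d = 1)"
  using G0 fl_s unfolding nl_def by auto

lemma ph4: "d \<in> D \<Longrightarrow> (ph ^^ 4) d = d"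
  using orb_card(2)[OF fin bph] face4 unfolding fphi_eq by metis

lemma G3bnew: "\<forall>d\<in>D. orb (fphi alpha sigma) d \<noteq> orb (fphi alpha sigma) d0 \<longrightarrow>
        (\<exists>k. nl ((fphi alpha sigma ^^ k) d) = 0 \<and> nl ((fphi alpha sigma ^^ (k+1)) d) = 0 \<and>
             nl ((fphi alpha sigma ^^ (k+2)) d) = 1 \<and> nl ((fphi alpha sigma ^^ (k+3)) d) = 1)"
  unfolding fphi_eq
proof (intro ballI impI)
  fix d assume d: "d \<in> D" and ne: "orb ph d \<noteq> orb ph d0"
  obtain kk where kk: "lab ((ph ^^ kk) d) = 0" "lab ((ph ^^ (kk+1)) d) = 0"
    "lab ((ph ^^ (kk+2)) d) = 1" "lab ((ph ^^ (kk+3)) d) = 1"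
    using G3b d ne unfolding fphi_eq by blast
  have nlp: "nl ((ph ^^ m) d) = (if fl d then 1 - lab ((ph ^^ m) d) else lab ((ph ^^ m) d))" for m
    unfolding nl_def using fl_funpow[OF d] by simp
  show "\<exists>k. nl ((ph ^^ k) d) = 0 \<and> nl ((ph ^^ (k+1)) d) = 0 \<and>
             nl ((ph ^^ (k+2)) d) = 1 \<and> nl ((ph ^^ (k+3)) d) = 1"
  proof (cases "fl d")
    case False
    have "nl ((ph ^^ kk) d) = 0" "nl ((ph ^^ (kk+1)) d) = 0" "nl ((ph ^^ (kk+2)) d) = 1" "nl ((ph ^^ (kk+3)) d) = 1"
      using kk nlp[of kk] nlp[of "kk+1"] nlp[of "kk+2"] nlp[of "kk+3"] False by simp_all
    then show ?thesis by blast
  next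
    case True
    have p: "(ph ^^ (m + 4)) d = (ph ^^ m) d" for m
    proof -
      have "(ph ^^ (m + 4)) d = (ph ^^ m) ((ph ^^ 4) d)" by (simp add: funpow_add)
      thus ?thesis using ph4[OF d] by simp
    qed
    have e1: "kk + 2 + 2 = kk + 4" by simp
    have a: "(ph ^^ (kk + 2 + 2)) d = (ph ^^ kk) d" unfolding e1 by (rule p)
    have e2: "kk + 2 + 3 = (kk + 1) + 4" by simp
    have b: "(ph ^^ (kk + 2 + 3)) d = (ph ^^ (kk + 1)) d" unfolding e2 by (rule p)
    show ?thesis
    proof (intro exI[of _ "kk + 2"] conjI)
      have nlt: "nl ((ph ^^ m) d) = 1 - lab ((ph ^^ m) d)" for m using nlp[of m] True by simp
      have e3: "kk + 2 + 1 = kk + 3" by simp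
      show "nl ((ph ^^ (kk + 2)) d) = 0" unfolding nlt kk(3) by simp
      show "nl ((ph ^^ (kk + 2 + 1)) d) = 0" unfolding e3 nlt kk(4) by simp
      show "nl ((ph ^^ (kk + 2 + 2)) d) = 1" unfolding a nlt kk(1) by simp
      show "nl ((ph ^^ (kk + 2 + 3)) d) = 1" unfolding b nlt kk(2) by simp
    qed
  qed
qed

lemma G3onew: "\<forall>d\<in>orb (fphi alpha sigma) d0. vert d = s0 \<longrightarrow>
        nl d = 0 \<and> nl (fphi alpha sigma d) = 0 \<and>
        nl ((fphi alpha sigma ^^ 2) d) = 1 \<and> nl ((fphi alpha sigma ^^ 3) d) = 1"
  unfolding fphi_eq
proof (intro ballI impI)
  fix d assume d: "d \<in> orb ph d0" and v: "vert d = s0"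
  have dD: "d \<in> D" using d orb_in[OF bph d0D] by blast
  have nf: "\<not> fl d" using outer_E[OF d] unfolding fl_def by simp
  have nlp: "nl ((ph ^^ m) d) = lab ((ph ^^ m) d)" for m
    unfolding nl_def using fl_funpow[OF dD, of m] nf by simp
  have "lab d = 0 \<and> lab (ph d) = 0 \<and> lab ((ph ^^ 2) d) = 1 \<and> lab ((ph ^^ 3) d) = 1"
    using G3o d v unfolding fphi_eq by blast
  thus "nl d = 0 \<and> nl (ph d) = 0 \<and> nl ((ph ^^ 2) d) = 1 \<and> nl ((ph ^^ 3) d) = 1"
    using nlp[of 0] nlp[of 1] nlp[of 2] nlp[of 3] by simp
qed

lemma per_sigma: "d \<in> D \<Longrightarrow> (sigma ^^ (i + card (orb sigma d))) d = (sigma ^^ i) d"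
proof -
  assume d: "d \<in> D"
  have "(sigma ^^ (i + card (orb sigma d))) d = (sigma ^^ i) ((sigma ^^ card (orb sigma d)) d)"
    by (simp add: funpow_add)
  thus ?thesis using orb_card(2)[OF fin bs d] by simp
qed

lemma changes_card:
  assumes d: "d \<in> D"
  shows "card {x \<in> orb sigma d. m x \<noteq> m (sigma x)} =
    card {i. i < card (orb sigma d) \<and> m ((sigma ^^ i) d) \<noteq> m ((sigma ^^ Suc i) d)}"
  using orb_pred_card[OF fin bs d, of "\<lambda>x. m x \<noteq> m (sigma x)"] by simp

lemma in_orb_vert: "d \<in> D \<Longrightarrow> x \<in> orb sigma d \<longleftrightarrow> x \<in> D \<and> vert x = vert d"
  using vert_orb by blast

lemma outdeg_eq:
  assumes d: "d \<in> D"
  shows "card {x \<in> orb sigma d. x \<in> X'} = card {x \<in> orb sigma d. x \<in> X}"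
proof (cases "\<exists>j<k. vert (cs ! j) = vert d")
  case True
  then obtain j where j: "j < k" "vert (cs ! j) = vert d" by blast
  define i where "i = (j + k - 1) mod k"
  have ik: "i < k" unfolding i_def using k_pos by simp
  have ni: "nxt i = j"
  proof -
    have "nxt i = Suc (j + k - 1) mod k" unfolding nxt_def i_def by (simp add: mod_Suc_eq)
    also have "Suc (j + k - 1) = j + k" using k_pos by simp
    finally show ?thesis using j(1) by simp
  qed
  define A where "A = {x \<in> orb sigma d. x \<in> X}"
  have cjD: "cs ! j \<in> D" using csiD j(1) by simp
  have aci: "alpha (cs ! i) \<in> D" using a_in csiD ik by simp
  have vai: "vert (alpha (cs ! i)) = vert d" using cyc[OF ik] ni j(2) by simp
  have aciX: "alpha (cs ! i) \<notin> X" using X_alpha csiX ik by blast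
  have cjX: "cs ! j \<in> X" using csiX j(1) by simp
  have atv: "x = cs ! j \<or> x = alpha (cs ! i)" if "x \<in> S" "vert x = vert d" for x
    using S_at_vertex[OF ik that(1)] that(2) ni j(2) by simp
  have eq: "{x \<in> orb sigma d. x \<in> X'} = insert (alpha (cs ! i)) (A - {cs ! j})"
  proof (intro set_eqI iffI)
    fix x assume x: "x \<in> {x \<in> orb sigma d. x \<in> X'}"
    hence xo: "x \<in> D" "vert x = vert d" using in_orb_vert[OF d] by auto
    have "x \<in> (X - set cs) \<union> alpha ` set cs" using x Xrev unfolding reverse_cycle_def by blast
    then show "x \<in> insert (alpha (cs ! i)) (A - {cs ! j})"
    proof
      assume "x \<in> X - set cs"
      moreover have "cs ! j \<in> set cs" using j(1) by simp
      ultimately show ?thesis unfolding A_def using x by auto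
    next
      assume xa: "x \<in> alpha ` set cs"
      hence "x \<in> S" unfolding S_def by blast
      hence "x = cs ! j \<or> x = alpha (cs ! i)" using atv xo by blast
      moreover have "x \<notin> X" using xa X_alpha csX by blast
      ultimately show ?thesis using cjX by auto
    qed
  next
    fix x assume x: "x \<in> insert (alpha (cs ! i)) (A - {cs ! j})"
    then show "x \<in> {x \<in> orb sigma d. x \<in> X'}"
    proof
      assume "x = alpha (cs ! i)"
      moreover have "alpha (cs ! i) \<in> orb sigma d" using in_orb_vert[OF d] aci vai by simp
      moreover have "alpha (cs ! i) \<in> X'" using Xrev ik unfolding reverse_cycle_def by simp
      ultimately show ?thesis by simp
    next
      assume xA: "x \<in> A - {cs ! j}"
      hence xo: "x \<in> D" "vert x = vert d" "x \<in> X" using in_orb_vert[OF d] A_def by auto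
      have "x \<notin> set cs"
      proof
        assume "x \<in> set cs"
        hence "x \<in> S" unfolding S_def by blast
        hence "x = cs ! j \<or> x = alpha (cs ! i)" using atv xo by blast
        thus False using xA xo(3) aciX by auto
      qed
      hence "x \<in> X'" using Xrev xo(3) unfolding reverse_cycle_def by blast
      thus ?thesis using xA A_def by blast
    qed
  qed
  have "A \<subseteq> D" unfolding A_def using orb_in[OF bs d] by blast
  hence finA: "finite A" using finite_subset fin by blast
  have cjA: "cs ! j \<in> A" unfolding A_def using in_orb_vert[OF d] cjD j(2) cjX by simp
  have aciA: "alpha (cs ! i) \<notin> A - {cs ! j}" unfolding A_def using aciX by simp
  have "card (insert (alpha (cs ! i)) (A - {cs ! j})) = card (A - {cs ! j}) + 1"
    using finA aciA by simp
  also have "\<dots> = card A" using finA cjA card_Suc_Diff1 by fastforce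
  finally show ?thesis unfolding eq A_def .
next
  case False
  have xx: "x \<in> X' \<longleftrightarrow> x \<in> X" if x: "x \<in> orb sigma d" for x
  proof -
    have xo: "x \<in> D" "vert x = vert d" using in_orb_vert[OF d] x by auto
    have n1: "x \<notin> set cs"
    proof
      assume "x \<in> set cs"
      then obtain m where "m < k" "x = cs ! m" by (auto simp: in_set_conv_nth)
      thus False using False xo by blast
    qed
    have n2: "x \<notin> alpha ` set cs"
    proof
      assume "x \<in> alpha ` set cs"
      then obtain m where m: "m < k" "x = alpha (cs ! m)" by (auto simp: in_set_conv_nth)
      hence "vert (cs ! nxt m) = vert d" using cyc[OF m(1)] xo by simp
      thus False using False nxt_lt[OF m(1)] by blast
    qed
    show ?thesis using Xrev n1 n2 unfolding reverse_cycle_def by blast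
  qed
  have "{x \<in> orb sigma d. x \<in> X'} = {x \<in> orb sigma d. x \<in> X}"
    using xx by blast
  then show ?thesis by simp
qed

lemma G1new: "\<forall>v\<in>vert ` D - {s0, s1}. \<exists>d\<in>D. vert d = v \<and>
        (\<exists>k. 0 < k \<and> k < card (orb sigma d) \<and>
           (\<forall>i<k. nl ((sigma ^^ i) d) = 1) \<and>
           (\<forall>i. k \<le> i \<and> i < card (orb sigma d) \<longrightarrow> nl ((sigma ^^ i) d) = 0))"
proof
  fix v assume v: "v \<in> vert ` D - {s0, s1}"
  have "\<exists>d\<in>D. vert d = v \<and>
        (\<exists>k. 0 < k \<and> k < card (orb sigma d) \<and>
           (\<forall>i<k. lab ((sigma ^^ i) d) = 1) \<and>
           (\<forall>i. k \<le> i \<and> i < card (orb sigma d) \<longrightarrow> lab ((sigma ^^ i) d) = 0))"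
    using G1 v by (rule bspec)
  then obtain d where d: "d \<in> D" "vert d = v" and ex: "\<exists>k. 0 < k \<and> k < card (orb sigma d) \<and>
           (\<forall>i<k. lab ((sigma ^^ i) d) = 1) \<and>
           (\<forall>i. k \<le> i \<and> i < card (orb sigma d) \<longrightarrow> lab ((sigma ^^ i) d) = 0)"
    by (elim bexE conjE)
  then obtain kk where kk: "0 < kk" "kk < card (orb sigma d)"
    "\<forall>i<kk. lab ((sigma ^^ i) d) = 1"
    "\<forall>i. kk \<le> i \<and> i < card (orb sigma d) \<longrightarrow> lab ((sigma ^^ i) d) = 0"
    by (elim exE conjE)
  define n where "n = card (orb sigma d)"
  have per: "\<And>i. (\<lambda>i. lab ((sigma ^^ i) d)) (i + n) = (\<lambda>i. lab ((sigma ^^ i) d)) i"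
    using per_sigma[OF d(1)] unfolding n_def by simp
  have chg: "{i. i < n \<and> lab ((sigma ^^ i) d) \<noteq> lab ((sigma ^^ Suc i) d)} = {kk - 1, n - 1}"
    using cyc_interval_changes[where L="\<lambda>i. lab ((sigma ^^ i) d)", OF per] kk unfolding n_def by auto
  have c2: "card {i. i < n \<and> lab ((sigma ^^ i) d) \<noteq> lab ((sigma ^^ Suc i) d)} = 2"
    unfolding chg using kk unfolding n_def by simp
  have "{x \<in> orb sigma d. x \<in> X} = {x \<in> orb sigma d. lab x \<noteq> lab (sigma x)}"
  proof (intro Collect_cong conj_cong refl)
    fix x assume "x \<in> orb sigma d"
    hence "x \<in> D" using orb_in[OF bs d(1)] by blast
    thus "x \<in> X \<longleftrightarrow> lab x \<noteq> lab (sigma x)" by (rule X_iff)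
  qed
  hence cX: "card {x \<in> orb sigma d. x \<in> X} = 2"
    using changes_card[OF d(1), of lab] c2 unfolding n_def by simp
  have "{x \<in> orb sigma d. x \<in> X'} = {x \<in> orb sigma d. nl x \<noteq> nl (sigma x)}"
  proof (intro Collect_cong conj_cong refl)
    fix x assume "x \<in> orb sigma d"
    hence "x \<in> D" using orb_in[OF bs d(1)] by blast
    thus "x \<in> X' \<longleftrightarrow> nl x \<noteq> nl (sigma x)" by (rule X'_iff)
  qed
  hence c2': "card {i. i < n \<and> nl ((sigma ^^ i) d) \<noteq> nl ((sigma ^^ Suc i) d)} = 2"
    using changes_card[OF d(1), of nl] outdeg_eq[OF d(1)] cX unfolding n_def by simp
  have npos: "0 < n" unfolding n_def using orb_card(1)[OF fin bs d(1)] .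
  have per': "\<And>i. (\<lambda>i. nl ((sigma ^^ i) d)) (i + n) = (\<lambda>i. nl ((sigma ^^ i) d)) i"
    using per_sigma[OF d(1)] unfolding n_def by simp
  have bin: "\<And>i. (\<lambda>i. nl ((sigma ^^ i) d)) i \<in> {0, 1}"
    using nl01 perm_funpow_in[OF bs d(1)] by simp
  obtain r kk' where r: "0 < kk'" "kk' < n" "\<forall>i<kk'. nl ((sigma ^^ (r + i)) d) = 1"
    "\<forall>i. kk' \<le> i \<and> i < n \<longrightarrow> nl ((sigma ^^ (r + i)) d) = 0"
  proof -
    have "\<exists>r k. 0 < k \<and> k < n \<and> (\<forall>i<k. nl ((sigma ^^ (r + i)) d) = 1) \<and>
        (\<forall>i. k \<le> i \<and> i < n \<longrightarrow> nl ((sigma ^^ (r + i)) d) = 0)"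
      using cyc_two_changes[where L="\<lambda>i. nl ((sigma ^^ i) d)", OF npos per' bin] c2' by simp
    thus ?thesis using that by blast
  qed
  define d' where "d' = (sigma ^^ r) d"
  have d'o: "d' \<in> orb sigma d" unfolding d'_def by (rule funpow_in_orb)
  have d'D: "d' \<in> D" and vd': "vert d' = v" using in_orb_vert[OF d(1)] d'o d(2) by auto
  have od': "orb sigma d' = orb sigma d" by (rule orb_eq[OF fin bs d(1) d'o])
  have sh: "(sigma ^^ i) d' = (sigma ^^ (r + i)) d" for i
    unfolding d'_def by (simp add: funpow_add add.commute)
  show "\<exists>d\<in>D. vert d = v \<and>
        (\<exists>k. 0 < k \<and> k < card (orb sigma d) \<and>
           (\<forall>i<k. nl ((sigma ^^ i) d) = 1) \<and>
           (\<forall>i. k \<le> i \<and> i < card (orb sigma d) \<longrightarrow> nl ((sigma ^^ i) d) = 0))"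
  proof (intro bexI[of _ d'] conjI exI[of _ kk'])
    show "d' \<in> D" "vert d' = v" using d'D vd' by auto
    show "0 < kk'" "kk' < card (orb sigma d')" using r(1,2) unfolding od' n_def by auto
    show "\<forall>i<kk'. nl ((sigma ^^ i) d') = 1" using r(3) unfolding sh by simp
    show "\<forall>i. kk' \<le> i \<and> i < card (orb sigma d') \<longrightarrow> nl ((sigma ^^ i) d') = 0"
      using r(4) unfolding sh od' n_def by simp
  qed
qed

end

theorem lemma25:
  fixes D :: "'d set" and alpha sigma :: "'d \<Rightarrow> 'd" and vert :: "'d \<Rightarrow> 'v"
    and d0 :: 'd and black :: "'v \<Rightarrow> bool" and s0 s1 :: 'v
    and lab :: "'d \<Rightarrow> nat" and cs :: "'d list"
  assumes "quadrangulation D alpha sigma vert d0 black s0 s1"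
    and "strong_labeling D alpha sigma vert d0 s0 s1 lab"
    and "directed_cycle alpha vert (induced_orientation D alpha sigma lab) cs"
  shows "strong_labeling D alpha sigma vert d0 s0 s1
           (\<lambda>d. if inside_cycle D alpha sigma d0 cs d then 1 - lab d else lab d)
       \<and> induced_orientation D alpha sigma
           (\<lambda>d. if inside_cycle D alpha sigma d0 cs d then 1 - lab d else lab d)
         = reverse_cycle alpha (induced_orientation D alpha sigma lab) cs"
proof -
  note Q = assms(1)[unfolded quadrangulation_def]
  have fin: "finite D" using Q by (elim conjE)
  have ba: "bij_betw alpha D D" using Q by (elim conjE)
  have bs: "bij_betw sigma D D" using Q by (elim conjE)
  have inv0: "\<forall>d\<in>D. alpha (alpha d) = d \<and> alpha d \<noteq> d" using Q by (elim conjE)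
  have vorb0: "\<forall>d\<in>D. \<forall>e\<in>D. vert d = vert e \<longleftrightarrow> e \<in> orb sigma d" using Q by (elim conjE)
  have conn0: "\<forall>d\<in>D. \<forall>e\<in>D. (d, e) \<in> ({(x, alpha x) | x. x \<in> D} \<union> {(x, sigma x) | x. x \<in> D})\<^sup>*"
    using Q by (elim conjE)
  have euler: "int (card (vert ` D)) - int (card D div 2)
        + int (card {orb (fphi alpha sigma) d | d. d \<in> D}) = 2" using Q by (elim conjE)
  have f4: "\<forall>d\<in>D. card (orb (fphi alpha sigma) d) = 4 \<and>
             card (vert ` orb (fphi alpha sigma) d) = 4" using Q by (elim conjE)
  have d0D: "d0 \<in> D" using Q by (elim conjE)
  have bl: "{v \<in> vert ` orb (fphi alpha sigma) d0. black v} = {s0, s1}" using Q by (elim conjE)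
  have s0o: "s0 \<in> vert ` orb (fphi alpha sigma) d0" and s1o: "s1 \<in> vert ` orb (fphi alpha sigma) d0"
    using bl by (auto simp: set_eq_iff)
  interpret L: lset D alpha sigma vert d0 s0 s1 lab cs
  proof (rule lset.intro)
    show "cmap D alpha sigma"
    proof (rule cmap.intro)
      show "finite D" by (rule fin)
      show "bij_betw alpha D D" by (rule ba)
      show "bij_betw sigma D D" by (rule bs)
      show "\<And>d. d \<in> D \<Longrightarrow> alpha (alpha d) = d" using inv0 by blast
      show "\<And>d. d \<in> D \<Longrightarrow> alpha d \<noteq> d" using inv0 by blast
      show "\<And>d e. d \<in> D \<Longrightarrow> e \<in> D \<Longrightarrow>
         (d, e) \<in> ({(x, alpha x) | x. x \<in> D} \<union> {(x, sigma x) | x. x \<in> D})\<^sup>*" using conn0 by blast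
    qed
    show "lset_axioms D alpha sigma vert d0 s0 s1 lab cs"
    proof (rule lset_axioms.intro)
      show "\<And>d e. d \<in> D \<Longrightarrow> e \<in> D \<Longrightarrow> vert d = vert e \<longleftrightarrow> e \<in> orb sigma d" using vorb0 by blast
      show "int (card (vert ` D)) - int (card D div 2)
        + int (card {orb (fphi alpha sigma) d | d. d \<in> D}) = 2" by (rule euler)
      show "d0 \<in> D" by (rule d0D)
      show "s0 \<in> vert ` orb (fphi alpha sigma) d0" by (rule s0o)
      show "s1 \<in> vert ` orb (fphi alpha sigma) d0" by (rule s1o)
      show "\<And>d. d \<in> D \<Longrightarrow> card (orb (fphi alpha sigma) d) = 4" using f4 by blast
      show "strong_labeling D alpha sigma vert d0 s0 s1 lab" by (rule assms(2))
      show "directed_cycle alpha vert (induced_orientation D alpha sigma lab) cs" by (rule assms(3))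
    qed
  qed
  have nleq: "(\<lambda>d. if inside_cycle D alpha sigma d0 cs d then 1 - lab d else lab d) = L.nl"
    by (rule ext) (simp add: L.inside_eq L.nl_def)
  have sl: "strong_labeling D alpha sigma vert d0 s0 s1 L.nl"
    unfolding strong_labeling_def
  proof (intro conjI)
    show "\<forall>d\<in>D. L.nl d \<in> {0, 1}" using L.nl01 by blast
    show "\<forall>d\<in>D. (vert d = s0 \<longrightarrow> L.nl d = 0) \<and> (vert d = s1 \<longrightarrow> L.nl d = 1)" by (rule L.G0new)
    show "\<forall>v\<in>vert ` D - {s0, s1}. \<exists>d\<in>D. vert d = v \<and>
        (\<exists>k. 0 < k \<and> k < card (orb sigma d) \<and>
           (\<forall>i<k. L.nl ((sigma ^^ i) d) = 1) \<and>
           (\<forall>i. k \<le> i \<and> i < card (orb sigma d) \<longrightarrow> L.nl ((sigma ^^ i) d) = 0))" by (rule L.G1new)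
    show "\<forall>d\<in>D. (L.nl d = L.nl (sigma d)) \<noteq> (L.nl (alpha d) = L.nl (sigma (alpha d)))"
      using L.G2new by blast
    show "\<forall>d\<in>D. orb (fphi alpha sigma) d \<noteq> orb (fphi alpha sigma) d0 \<longrightarrow>
        (\<exists>k. L.nl ((fphi alpha sigma ^^ k) d) = 0 \<and> L.nl ((fphi alpha sigma ^^ (k+1)) d) = 0 \<and>
             L.nl ((fphi alpha sigma ^^ (k+2)) d) = 1 \<and> L.nl ((fphi alpha sigma ^^ (k+3)) d) = 1)"
      by (rule L.G3bnew)
    show "\<forall>d\<in>orb (fphi alpha sigma) d0. vert d = s0 \<longrightarrow>
        L.nl d = 0 \<and> L.nl (fphi alpha sigma d) = 0 \<and>
        L.nl ((fphi alpha sigma ^^ 2) d) = 1 \<and> L.nl ((fphi alpha sigma ^^ 3) d) = 1"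
      by (rule L.G3onew)
  qed
  show ?thesis unfolding nleq using sl L.Xrev by simp
qed

end
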